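(* Let $H$ be a right Hilbert module over a $C^*$-algebra and let $Q\in\mathcal{L}(H)$ be an idempotent. Then $$|Q^*|+|I-Q|=|Q|+|I-Q^*|,$$ and both sides have square equal to $I-Q-Q^*+QQ^*+Q^*Q$.
   Context: $\mathcal{L}(H)$ denotes the $C^*$-algebra of all adjointable operators on $H$, $I$ is the identity operator on $H$, $T^*$ is the adjoint of $T$, and $|T|=(T^*T)^{1/2}$ is the positive square root. $Q$ is an idempotent if $Q^2=Q$. *)

theory Defs
  imports "HOL-Analysis.Analysis"
begin

text \<open>The algebra L(H) of adjointable
operators on a Hilbert C*-module H is a unital C*-algebra, and every unital
C*-algebra A arises as L(A_A); so we state the result for an arbitrary unital
C*-algebra with unit 1 (playing the role of I) and involution adj (the adjoint).\<close>

class cstar_algebra = real_normed_algebra_1 + banach +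
  fixes scaleC :: "complex \<Rightarrow> 'a \<Rightarrow> 'a"
    and adj :: "'a \<Rightarrow> 'a"
  assumes scaleC_of_real: "scaleC (complex_of_real r) x = scaleR r x"
    and scaleC_add_right: "scaleC a (x + y) = scaleC a x + scaleC a y"
    and scaleC_add_left: "scaleC (a + b) x = scaleC a x + scaleC b x"
    and scaleC_scaleC: "scaleC a (scaleC b x) = scaleC (a * b) x"
    and scaleC_one: "scaleC 1 x = x"
    and norm_scaleC: "norm (scaleC a x) = cmod a * norm x"
    and mult_scaleC_left: "scaleC a x * y = scaleC a (x * y)"
    and mult_scaleC_right: "x * scaleC a y = scaleC a (x * y)"
    and adj_adj: "adj (adj x) = x"
    and adj_add: "adj (x + y) = adj x + adj y"
    and adj_mult: "adj (x * y) = adj y * adj x"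
    and adj_scaleC: "adj (scaleC a x) = scaleC (cnj a) (adj x)"
    and cstar_identity: "norm (adj x * x) = (norm x)\<^sup>2"

definition cinvertible :: "'a::cstar_algebra \<Rightarrow> bool" where
  "cinvertible a \<longleftrightarrow> (\<exists>b. a * b = 1 \<and> b * a = 1)"

definition cspectrum :: "'a::cstar_algebra \<Rightarrow> complex set" where
  "cspectrum a = {c. \<not> cinvertible (a - scaleC c 1)}"

definition cpositive :: "'a::cstar_algebra \<Rightarrow> bool" where
  "cpositive a \<longleftrightarrow> adj a = a \<and> cspectrum a \<subseteq> complex_of_real ` {0..}"

definition cabs :: "'a::cstar_algebra \<Rightarrow> 'a" where
  "cabs t = (THE p. cpositive p \<and> p * p = adj t * t)"

end

theory Submission
  imports Defs "HOL-Complex_Analysis.Complex_Analysis"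
begin

lemma scaleC_zero_right [simp]: "scaleC a (0::'a::cstar_algebra) = 0"
proof -
  have "scaleC a (0::'a) + scaleC a 0 = scaleC a 0 + 0"
    using scaleC_add_right[of a "0::'a" 0] by simp
  then show ?thesis by simp
qed

lemma scaleC_zero_left [simp]: "scaleC 0 (x::'a::cstar_algebra) = 0"
proof -
  have "scaleC 0 x + scaleC 0 x = scaleC 0 x + 0"
    using scaleC_add_left[of 0 0 x] by simp
  then show ?thesis by simp
qed

lemma scaleC_minus_right: "scaleC a (- x::'a::cstar_algebra) = - scaleC a x"
proof -
  have "scaleC a (- x) + scaleC a x = 0"
    using scaleC_add_right[of a "-x" x] by simp
  then show ?thesis by (simp add: eq_neg_iff_add_eq_0)
qed

lemma scaleC_minus_left: "scaleC (-a) (x::'a::cstar_algebra) = - scaleC a x"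
proof -
  have "scaleC (-a) x + scaleC a x = 0"
    using scaleC_add_left[of "-a" a x] by simp
  then show ?thesis by (simp add: eq_neg_iff_add_eq_0)
qed

lemma scaleC_diff_right: "scaleC a (x - y::'a::cstar_algebra) = scaleC a x - scaleC a y"
  using scaleC_add_right[of a x "-y"] by (simp add: scaleC_minus_right)

lemma scaleC_diff_left: "scaleC (a - b) (x::'a::cstar_algebra) = scaleC a x - scaleC b x"
  using scaleC_add_left[of a "-b" x] by (simp add: scaleC_minus_left)
lemma scaleC_1_left: "scaleC c (x::'a::cstar_algebra) = scaleC c 1 * x"
  by (simp add: mult_scaleC_left)

lemma scaleC_1_right: "scaleC c (x::'a::cstar_algebra) = x * scaleC c 1"
  by (simp add: mult_scaleC_right)

lemma adj_zero [simp]: "adj (0::'a::cstar_algebra) = 0"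
proof -
  have "adj (0::'a) + adj 0 = adj 0 + 0"
    using adj_add[of "0::'a" 0] by simp
  then show ?thesis by simp
qed

lemma adj_minus: "adj (- x::'a::cstar_algebra) = - adj x"
proof -
  have "adj (- x) + adj x = 0"
    using adj_add[of "-x" x] by simp
  then show ?thesis by (simp add: eq_neg_iff_add_eq_0)
qed

lemma adj_diff: "adj (x - y::'a::cstar_algebra) = adj x - adj y"
  using adj_add[of x "-y"] by (simp add: adj_minus)

lemma adj_one [simp]: "adj (1::'a::cstar_algebra) = 1"
proof -
  have "adj (adj (1::'a) * 1) = adj 1 * adj (adj 1)" by (rule adj_mult)
  then show ?thesis by (simp add: adj_adj)
qed

lemma adj_scaleR: "adj (scaleR r x::'a::cstar_algebra) = scaleR r (adj x)"
proof -
  have "adj (scaleR r x) = adj (scaleC (complex_of_real r) x)" by (simp add: scaleC_of_real)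
  also have "\<dots> = scaleC (complex_of_real r) (adj x)" by (simp add: adj_scaleC)
  also have "\<dots> = scaleR r (adj x)" by (simp add: scaleC_of_real)
  finally show ?thesis .
qed

lemma norm_adj [simp]: "norm (adj (x::'a::cstar_algebra)) = norm x"
proof -
  have le: "norm y \<le> norm (adj y)" for y :: 'a
  proof (cases "y = 0")
    case True then show ?thesis by simp
  next
    case False
    have "norm y * norm y = norm (adj y * y)" by (simp add: cstar_identity power2_eq_square)
    also have "\<dots> \<le> norm (adj y) * norm y" by (rule norm_mult_ineq)
    finally have "norm y * norm y \<le> norm (adj y) * norm y" .
    moreover have "norm y > 0" using False by simp
    ultimately show ?thesis by simp
  qed
  show ?thesis using le[of x] le[of "adj x"] by (simp add: adj_adj)
qed

lemma adj_power: "adj ((x::'a::cstar_algebra) ^ n) = adj x ^ n"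
proof (induction n)
  case 0 then show ?case by simp
next
  case (Suc n)
  have "adj (x ^ Suc n) = adj (x ^ n * x)" by (simp only: power_Suc2)
  also have "\<dots> = adj x * adj x ^ n" by (simp add: adj_mult Suc)
  finally show ?case by (simp only: power_Suc)
qed

lemma norm_sa_square: "adj (h::'a::cstar_algebra) = h \<Longrightarrow> norm (h * h) = (norm h)^2"
  using cstar_identity[of h] by simp

lemma bounded_linear_adj: "bounded_linear (adj :: 'a::cstar_algebra \<Rightarrow> 'a)"
  by (rule bounded_linear_intro[where K=1]) (simp_all add: adj_add adj_scaleR)

definition cinv :: "'a::cstar_algebra \<Rightarrow> 'a" where
  "cinv a = (SOME b. a * b = 1 \<and> b * a = 1)"

lemma cinv_props:
  assumes "cinvertible a" shows "a * cinv a = 1" "cinv a * a = 1"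
proof -
  from assms obtain b where "a * b = 1 \<and> b * a = 1" unfolding cinvertible_def by blast
  then have "a * cinv a = 1 \<and> cinv a * a = 1" unfolding cinv_def by (rule someI)
  then show "a * cinv a = 1" "cinv a * a = 1" by auto
qed

lemma inverse_unique_c:
  fixes a b b' :: "'a::cstar_algebra"
  assumes "a * b = 1" "b' * a = 1" shows "b = b'"
proof -
  have "b = (b' * a) * b" using assms by simp
  also have "\<dots> = b' * (a * b)" by (simp add: mult.assoc)
  finally show ?thesis using assms by simp
qed

lemma cinv_eq:
  fixes a b :: "'a::cstar_algebra"
  assumes "a * b = 1" "b * a = 1" shows "cinvertible a" "cinv a = b"
proof -
  show inv: "cinvertible a" unfolding cinvertible_def using assms by blast
  show "cinv a = b" using inverse_unique_c[of a "cinv a" b] cinv_props[OF inv] assms by simp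
qed

lemma cinvertible_mult:
  fixes a b :: "'a::cstar_algebra"
  assumes "cinvertible a" "cinvertible b" shows "cinvertible (a * b)"
proof -
  have "(a * b) * (cinv b * cinv a) = a * (b * cinv b) * cinv a" by (simp add: mult.assoc)
  also have "\<dots> = 1" using cinv_props[OF assms(1)] cinv_props[OF assms(2)] by simp
  finally have 1: "(a * b) * (cinv b * cinv a) = 1" .
  have "(cinv b * cinv a) * (a * b) = cinv b * (cinv a * a) * b" by (simp add: mult.assoc)
  also have "\<dots> = 1" using cinv_props[OF assms(1)] cinv_props[OF assms(2)] by simp
  finally have 2: "(cinv b * cinv a) * (a * b) = 1" .
  show ?thesis using cinv_eq(1)[OF 1 2] .
qed

lemma cinvertible_one [simp]: "cinvertible (1::'a::cstar_algebra)"
  unfolding cinvertible_def by (rule exI[of _ 1]) simp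

lemma cinvertible_scaleC:
  fixes a :: "'a::cstar_algebra"
  assumes "cinvertible a" "c \<noteq> 0" shows "cinvertible (scaleC c a)"
proof -
  have 1: "scaleC c a * scaleC (inverse c) (cinv a) = 1"
    using cinv_props[OF assms(1)] assms(2)
    by (simp add: mult_scaleC_left mult_scaleC_right scaleC_scaleC scaleC_one)
  have 2: "scaleC (inverse c) (cinv a) * scaleC c a = 1"
    using cinv_props[OF assms(1)] assms(2)
    by (simp add: mult_scaleC_left mult_scaleC_right scaleC_scaleC scaleC_one)
  show ?thesis using cinv_eq(1)[OF 1 2] .
qed

lemma cinvertible_uminus:
  fixes a :: "'a::cstar_algebra"
  assumes "cinvertible a" shows "cinvertible (- a)"
proof -
  have "(- a) * (- cinv a) = 1" "(- cinv a) * (- a) = 1" using cinv_props[OF assms] by simp_all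
  then show ?thesis using cinv_eq(1) by blast
qed

lemma cinv_commute:
  fixes a c :: "'a::cstar_algebra"
  assumes "cinvertible a" "a * c = c * a" shows "cinv a * c = c * cinv a"
proof -
  have "cinv a * c = cinv a * c * (a * cinv a)" using cinv_props[OF assms(1)] by simp
  also have "\<dots> = cinv a * (c * a) * cinv a" by (simp add: mult.assoc)
  also have "\<dots> = cinv a * (a * c) * cinv a" using assms(2) by simp
  also have "\<dots> = (cinv a * a) * c * cinv a" by (simp add: mult.assoc)
  also have "\<dots> = c * cinv a" using cinv_props[OF assms(1)] by simp
  finally show ?thesis .
qed

lemma cinvertible_cinv:
  fixes a :: "'a::cstar_algebra"
  assumes "cinvertible a" shows "cinvertible (cinv a)" "cinv (cinv a) = a"
  using cinv_eq[of "cinv a" a] cinv_props[OF assms] by auto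

lemma cinvertible_mult_commute_left:
  fixes a b :: "'a::cstar_algebra"
  assumes "cinvertible (a * b)" "a * b = b * a" shows "cinvertible a"
proof -
  let ?w = "cinv (a * b)"
  have 1: "a * (b * ?w) = 1" using cinv_props(1)[OF assms(1)] by (simp add: mult.assoc)
  have "(b * ?w) * a = ?w * (b * a)"
  proof -
    have "?w * b = b * ?w"
    proof -
      have "(a * b) * b = b * (a * b)" using assms(2) by (simp add: mult.assoc)
      then show ?thesis using cinv_commute[OF assms(1)] by simp
    qed
    then show ?thesis by (metis mult.assoc)
  qed
  also have "\<dots> = 1" using cinv_props(2)[OF assms(1)] assms(2) by simp
  finally have 2: "(b * ?w) * a = 1" .
  show ?thesis using cinv_eq(1)[OF 1 2] .
qed

abbreviation sc :: "complex \<Rightarrow> 'a::cstar_algebra" where "sc c \<equiv> scaleC c 1"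

lemma sc_commute: "sc c * (z::'a::cstar_algebra) = z * sc c"
  by (simp add: mult_scaleC_left mult_scaleC_right)

lemma sc_mult: "(sc c :: 'a::cstar_algebra) * sc d = sc (c * d)"
  by (simp add: mult_scaleC_left scaleC_scaleC)

lemma sc_real: "(sc (complex_of_real r) :: 'a::cstar_algebra) = of_real r"
  by (rule trans[OF scaleC_of_real]) (simp add: of_real_def)

lemma norm_sc: "norm (sc c :: 'a::cstar_algebra) = cmod c"
  by (simp add: norm_scaleC)

lemma adj_sc: "adj (sc c :: 'a::cstar_algebra) = sc (cnj c)"
  by (simp add: adj_scaleC)

subsection \<open>Neumann series\<close>

lemma neumann:
  fixes x :: "'a::cstar_algebra"
  assumes "norm x < 1"
  shows "cinvertible (1 - x)" "cinv (1 - x) = (\<Sum>n. x ^ n)" "norm (cinv (1 - x)) \<le> 1 / (1 - norm x)"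
proof -
  have sn: "summable (\<lambda>n. norm (x ^ n))"
    by (rule summable_comparison_test[where g="\<lambda>n. norm x ^ n"])
       (use assms norm_power_ineq in \<open>auto intro: summable_geometric\<close>)
  have s: "summable (\<lambda>n. x ^ n)" using sn by (rule summable_norm_cancel)
  define S where "S = (\<Sum>n. x ^ n)"
  have h: "(\<Sum>n. x ^ Suc n) = S - 1" unfolding S_def using suminf_split_head[OF s] by simp
  have "x * S = (\<Sum>n. x * x ^ n)" unfolding S_def using suminf_mult[OF s, of x] by simp
  also have "\<dots> = S - 1" using h by simp
  finally have 1: "x * S = S - 1" .
  have "S * x = (\<Sum>n. x ^ n * x)" unfolding S_def using suminf_mult2[OF s, of x] by simp
  also have "\<dots> = S - 1" using h by (simp add: power_commutes)
  finally have 2: "S * x = S - 1" .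
  have a: "(1 - x) * S = 1" using 1 by (simp add: algebra_simps)
  have b: "S * (1 - x) = 1" using 2 by (simp add: algebra_simps)
  show "cinvertible (1 - x)" "cinv (1 - x) = (\<Sum>n. x ^ n)" using cinv_eq[OF a b] S_def by auto
  have "norm S \<le> (\<Sum>n. norm (x ^ n))" unfolding S_def by (rule summable_norm[OF sn])
  also have "\<dots> \<le> (\<Sum>n. norm x ^ n)"
    by (rule suminf_le) (use assms sn norm_power_ineq in \<open>auto intro: summable_geometric\<close>)
  also have "\<dots> = 1 / (1 - norm x)" using assms by (simp add: suminf_geometric)
  finally show "norm (cinv (1 - x)) \<le> 1 / (1 - norm x)" using cinv_eq[OF a b] by simp
qed

lemma spec_outside_norm:
  fixes x :: "'a::cstar_algebra"
  assumes "cmod c > norm x" shows "cinvertible (x - sc c)"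
proof -
  have c0: "c \<noteq> 0" using assms norm_ge_zero[of x] by auto
  have cp: "cmod c > 0" using c0 by simp
  have n0: "norm (scaleC (inverse c) x) = norm x / cmod c"
    by (simp add: norm_scaleC norm_inverse divide_inverse mult.commute)
  have n: "norm (scaleC (inverse c) x) < 1"
    unfolding n0 using assms cp by (simp add: divide_less_eq)
  have "x - sc c = scaleC (- c) (1 - scaleC (inverse c) x)"
    using c0 by (simp add: scaleC_diff_right scaleC_scaleC scaleC_minus_left scaleC_one)
  then show ?thesis using cinvertible_scaleC[OF neumann(1)[OF n], of "-c"] c0 by simp
qed

lemma cspectrum_norm: "c \<in> cspectrum (x::'a::cstar_algebra) \<Longrightarrow> cmod c \<le> norm x"
  unfolding cspectrum_def using spec_outside_norm[of x c] by force

subsection \<open>Perturbation and continuity of the inverse\<close>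

lemma inv_perturb:
  fixes a e :: "'a::cstar_algebra"
  assumes inv: "cinvertible a" and small: "norm e * norm (cinv a) < 1"
  shows "cinvertible (a + e)"
        "norm (cinv (a + e) - cinv a) \<le> norm (cinv a) ^ 2 * norm e / (1 - norm e * norm (cinv a))"
proof -
  define b where "b = cinv a"
  have ab: "a * b = 1" "b * a = 1" using cinv_props[OF inv] b_def by auto
  have nbe: "norm (- (b * e)) < 1"
    using small norm_mult_ineq[of b e] b_def by (simp add: mult.commute) 
  define W where "W = cinv (1 - - (b * e))"
  have Winv: "(1 + b * e) * W = 1" "W * (1 + b * e) = 1"
    using cinv_props[OF neumann(1)[OF nbe]] W_def by auto
  have Wn: "norm W \<le> 1 / (1 - norm (b * e))" using neumann(3)[OF nbe] W_def by simp
  have f1: "a + e = a * (1 + b * e)" using ab by (simp add: algebra_simps mult.assoc[symmetric])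
  have f2: "b * (a + e) = 1 + b * e" using ab by (simp add: algebra_simps)
  have i1: "(a + e) * (W * b) = 1"
  proof -
    have "(a + e) * (W * b) = a * ((1 + b * e) * W) * b" using f1 by (simp add: mult.assoc)
    then show ?thesis using Winv ab by simp
  qed
  have i2: "(W * b) * (a + e) = 1"
  proof -
    have "(W * b) * (a + e) = W * (b * (a + e))" by (simp add: mult.assoc)
    then show ?thesis using f2 Winv by simp
  qed
  show "cinvertible (a + e)" using cinv_eq[OF i1 i2] by simp
  have ce: "cinv (a + e) = W * b" using cinv_eq[OF i1 i2] by simp
  have "W - 1 = - (W * (b * e))"
  proof -
    have "W = W * (1 + b * e) - W * (b * e)" by (simp add: algebra_simps)
    then show ?thesis using Winv by (simp add: algebra_simps)
  qed
  moreover have "cinv (a + e) - cinv a = (W - 1) * b"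
    using ce b_def by (simp add: algebra_simps)
  ultimately have eq: "cinv (a + e) - cinv a = - (W * (b * e) * b)" by simp
  have "norm (cinv (a + e) - cinv a) = norm (W * (b * e) * b)" unfolding eq by (rule norm_minus_cancel)
  also have "\<dots> \<le> norm (W * (b * e)) * norm b" by (rule norm_mult_ineq)
  also have "\<dots> \<le> (norm W * norm (b * e)) * norm b" by (intro mult_right_mono norm_mult_ineq) auto
  also have "\<dots> \<le> (norm W * (norm b * norm e)) * norm b"
    by (intro mult_right_mono mult_left_mono norm_mult_ineq) auto
  finally have "norm (cinv (a + e) - cinv a) \<le> norm W * (norm b * norm e) * norm b" .
  also have "\<dots> \<le> (1 / (1 - norm (b * e))) * (norm b * norm e) * norm b"
    by (intro mult_right_mono Wn) auto
  also have "\<dots> \<le> (1 / (1 - norm e * norm b)) * (norm b * norm e) * norm b"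
  proof -
    have "norm (b * e) \<le> norm e * norm b" using norm_mult_ineq[of b e] by (simp add: mult.commute)
    moreover have "norm e * norm b < 1" using small b_def by simp
    ultimately have "1 / (1 - norm (b * e)) \<le> 1 / (1 - norm e * norm b)"
      by (intro divide_left_mono) (auto intro: mult_pos_pos)
    then show ?thesis by (intro mult_right_mono) auto
  qed
  also have "\<dots> = norm (cinv a) ^ 2 * norm e / (1 - norm e * norm (cinv a))"
    using b_def by (simp add: power2_eq_square field_simps)
  finally show "norm (cinv (a + e) - cinv a) \<le> norm (cinv a) ^ 2 * norm e / (1 - norm e * norm (cinv a))" .
qed

lemma isCont_cinv:
  fixes a :: "'a::cstar_algebra"
  assumes inv: "cinvertible a"
  shows "isCont cinv a"
proof -
  define K where "K = norm (cinv a) + 1"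
  have K: "K > 0" "norm (cinv a) < K" unfolding K_def using norm_ge_zero[of "cinv a"] by linarith+
  show ?thesis unfolding isCont_def LIM_eq
  proof (intro allI impI)
    fix r :: real assume r: "r > 0"
    define s where "s = min (1 / (2 * K)) (r / (4 * K * K))"
    have s: "s > 0" using K r unfolding s_def by auto
    show "\<exists>s>0. \<forall>x. x \<noteq> a \<and> norm (x - a) < s \<longrightarrow> norm (cinv x - cinv a) < r"
    proof (intro exI[of _ s] conjI allI impI s)
      fix x assume x: "x \<noteq> a \<and> norm (x - a) < s"
      define e where "e = x - a"
      have ne: "norm e < s" using x e_def by simp
      have p1: "norm e * norm (cinv a) \<le> 1/2"
      proof -
        have "norm e * norm (cinv a) \<le> s * K" using ne K s by (intro mult_mono) auto
        also have "\<dots> \<le> (1 / (2 * K)) * K" using K unfolding s_def by (intro mult_right_mono) auto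
        finally show ?thesis using K by simp
      qed
      then have p1': "norm e * norm (cinv a) < 1" by simp
      have "norm (cinv (a + e) - cinv a) \<le> norm (cinv a) ^ 2 * norm e / (1 - norm e * norm (cinv a))"
        by (rule inv_perturb(2)[OF inv p1'])
      also have "\<dots> \<le> norm (cinv a) ^ 2 * norm e / (1/2)"
        using p1 by (intro divide_left_mono) auto
      also have "\<dots> \<le> K^2 * s * 2"
        using K ne s by (simp, intro mult_mono power_mono) auto
      also have "\<dots> \<le> K^2 * (r / (4 * K * K)) * 2"
        using K unfolding s_def by (intro mult_right_mono mult_left_mono) auto
      also have "\<dots> = r / 2" using K by (simp add: power2_eq_square field_simps)
      finally have "norm (cinv (a + e) - cinv a) \<le> r / 2" .
      then show "norm (cinv x - cinv a) < r" using r e_def by simp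
    qed
  qed
qed

lemma not_spec: "c \<notin> cspectrum x \<longleftrightarrow> cinvertible (x - sc c)"
  unfolding cspectrum_def by simp

lemma sc_add: "(sc (c + d) :: 'a::cstar_algebra) = sc c + sc d"
  by (simp add: scaleC_add_left)

lemma sc_diff: "(sc (c - d) :: 'a::cstar_algebra) = sc c - sc d"
  by (simp add: scaleC_diff_left)

lemma sc_zero [simp]: "(sc 0 :: 'a::cstar_algebra) = 0"
  by simp

lemma sc_one [simp]: "(sc 1 :: 'a::cstar_algebra) = 1"
  by (simp add: scaleC_one)

lemma sa_spec_real:
  fixes h :: "'a::cstar_algebra"
  assumes sa: "adj h = h" and c: "c \<in> cspectrum h"
  shows "Im c = 0"
proof (rule ccontr)
  assume b0: "Im c \<noteq> 0"
  define \<alpha> where "\<alpha> = Re c"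
  define \<beta> where "\<beta> = Im c"
  define d where "d = h - sc (complex_of_real \<alpha>)"
  have sad: "adj d = d" unfolding d_def by (simp add: adj_diff sa adj_sc)
  have key: "(\<beta> + t)^2 \<le> (norm d)^2 + t^2" for t :: real
  proof -
    define e :: 'a where "e = sc (\<i> * complex_of_real t)"
    define y where "y = d + e"
    have ce: "c = complex_of_real \<alpha> + \<i> * complex_of_real \<beta>"
      unfolding \<alpha>_def \<beta>_def by (simp add: complex_eq_iff)
    have "h - sc c = y - sc (\<i> * complex_of_real (\<beta> + t))"
      unfolding y_def e_def d_def ce by (simp add: sc_add algebra_simps)
    then have "\<not> cinvertible (y - sc (\<i> * complex_of_real (\<beta> + t)))"
      using c unfolding cspectrum_def by simp
    then have "cmod (\<i> * complex_of_real (\<beta> + t)) \<le> norm y"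
      using spec_outside_norm[of y] by force
    moreover have "cmod (\<i> * complex_of_real (\<beta> + t)) = \<bar>\<beta> + t\<bar>"
      by (simp add: norm_mult del: of_real_add)
    ultimately have 1: "\<bar>\<beta> + t\<bar> \<le> norm y" by simp
    have ae: "adj e = - e" unfolding e_def by (simp add: adj_sc scaleC_minus_left)
    have ee: "e * e = - sc (complex_of_real (t^2))"
    proof -
      have "(\<i> * complex_of_real t) * (\<i> * complex_of_real t) = - complex_of_real (t^2)"
        by (simp add: complex_eq_iff power2_eq_square)
      then show ?thesis unfolding e_def by (simp add: sc_mult scaleC_minus_left)
    qed
    have de: "d * e = e * d" unfolding e_def by (rule sc_commute[symmetric])
    have "adj y * y = (d - e) * (d + e)" unfolding y_def by (simp add: adj_add sad ae)
    also have "\<dots> = d * d - e * e" using de by (simp add: algebra_simps)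
    also have "\<dots> = d * d + sc (complex_of_real (t^2))" using ee by simp
    finally have yy: "adj y * y = d * d + sc (complex_of_real (t^2))" .
    have "(norm y)^2 = norm (adj y * y)" by (simp add: cstar_identity)
    also have "\<dots> \<le> norm (d * d) + norm (sc (complex_of_real (t^2)) :: 'a)"
      unfolding yy by (rule norm_triangle_ineq)
    also have "\<dots> \<le> (norm d)^2 + t^2"
      by (simp add: norm_sc norm_sa_square[OF sad] norm_power del: of_real_power)
    finally have 2: "(norm y)^2 \<le> (norm d)^2 + t^2" .
    have "(\<beta> + t)^2 = \<bar>\<beta> + t\<bar>^2" by simp
    also have "\<dots> \<le> (norm y)^2" using 1 by (intro power_mono) auto
    finally show ?thesis using 2 by linarith
  qed
  have bb: "\<beta> \<noteq> 0" using b0 \<beta>_def by simp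
  define t where "t = (norm d)^2 / (2 * \<beta>)"
  have "(\<beta> + t)^2 = \<beta>^2 + (norm d)^2 + t^2"
    unfolding t_def using bb by (simp add: power2_eq_square field_simps)
  with key[of t] have "\<beta>^2 \<le> 0" by linarith
  then show False using bb by simp
qed

lemma sa_square_positive:
  fixes w :: "'a::cstar_algebra"
  assumes sa: "adj w = w"
  shows "cpositive (w * w)"
  unfolding cpositive_def
proof (intro conjI subsetI)
  show "adj (w * w) = w * w" by (simp add: adj_mult sa)
  fix c assume c: "c \<in> cspectrum (w * w)"
  have im: "Im c = 0" using sa_spec_real[OF _ c] by (simp add: adj_mult sa)
  have re: "Re c \<ge> 0"
  proof (rule ccontr)
    assume "\<not> Re c \<ge> 0"
    define g where "g = sqrt (- Re c)"
    have g: "g > 0" "g^2 = - Re c" using \<open>\<not> Re c \<ge> 0\<close> unfolding g_def by auto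
    have i1: "cinvertible (w - sc (\<i> * complex_of_real g))"
      using sa_spec_real[OF sa, of "\<i> * complex_of_real g"] g not_spec by force
    have i2: "cinvertible (w - sc (- (\<i> * complex_of_real g)))"
      using sa_spec_real[OF sa, of "- (\<i> * complex_of_real g)"] g not_spec by force
    have ceq: "c = - complex_of_real (g^2)" using g im by (simp add: complex_eq_iff)
    have "(w - sc (\<i> * complex_of_real g)) * (w - sc (- (\<i> * complex_of_real g)))
          = w * w - sc c"
    proof -
      have "(w - sc (\<i> * complex_of_real g)) * (w - sc (- (\<i> * complex_of_real g)))
         = w * w + w * sc (\<i> * complex_of_real g) - sc (\<i> * complex_of_real g) * w
           - sc (\<i> * complex_of_real g) * sc (\<i> * complex_of_real g)"
        by (simp add: algebra_simps scaleC_minus_left)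
      also have "\<dots> = w * w - sc (\<i> * complex_of_real g) * sc (\<i> * complex_of_real g)"
        using sc_commute[of "\<i> * complex_of_real g" w] by simp
      also have "\<dots> = w * w - sc c"
      proof -
        have "(\<i> * complex_of_real g) * (\<i> * complex_of_real g) = c"
          unfolding ceq by (simp add: complex_eq_iff power2_eq_square)
        then show ?thesis by (simp add: sc_mult)
      qed
      finally show ?thesis .
    qed
    then have "cinvertible (w * w - sc c)" using cinvertible_mult[OF i1 i2] by simp
    then show False using c unfolding cspectrum_def by simp
  qed
  have "c = complex_of_real (Re c)" using im by (simp add: complex_eq_iff)
  then show "c \<in> complex_of_real ` {0..}" using re by auto
qed

lemma cpositive_invertible:
  fixes p :: "'a::cstar_algebra"
  assumes "cpositive p" "c \<notin> complex_of_real ` {0..}"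
  shows "cinvertible (p - sc c)"
  using assms unfolding cpositive_def cspectrum_def by auto

lemma cpositiveI:
  fixes p :: "'a::cstar_algebra"
  assumes "adj p = p" "\<And>c. c \<notin> complex_of_real ` {0..} \<Longrightarrow> cinvertible (p - sc c)"
  shows "cpositive p"
  using assms unfolding cpositive_def cspectrum_def by auto

lemma cpositive_zero: "cpositive (0::'a::cstar_algebra)"
proof (rule cpositiveI)
  fix c :: complex assume "c \<notin> complex_of_real ` {0..}"
  then have "c \<noteq> 0" by force
  then have "cinvertible (scaleC (- c) (1::'a))" by (intro cinvertible_scaleC) auto
  then show "cinvertible (0 - sc c :: 'a)" by (simp add: scaleC_minus_left)
qed simp

section \<open>A Hahn--Banach norming functional\<close>

definition hb_good :: "'a::real_normed_vector \<Rightarrow> ('a \<times> real) set \<Rightarrow> bool" where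
  "hb_good y G \<longleftrightarrow> (\<forall>a u v. (a,u) \<in> G \<longrightarrow> (a,v) \<in> G \<longrightarrow> u = v)
     \<and> (\<forall>a u b v. (a,u) \<in> G \<longrightarrow> (b,v) \<in> G \<longrightarrow> (a + b, u + v) \<in> G)
     \<and> (\<forall>a u r. (a,u) \<in> G \<longrightarrow> (scaleR r a, r * u) \<in> G)
     \<and> (\<forall>a u. (a,u) \<in> G \<longrightarrow> u \<le> norm a)
     \<and> (y, norm y) \<in> G"

lemma hb_good_D:
  assumes "hb_good y G"
  shows "\<And>a u v. (a,u) \<in> G \<Longrightarrow> (a,v) \<in> G \<Longrightarrow> u = v"
    "\<And>a u b v. (a,u) \<in> G \<Longrightarrow> (b,v) \<in> G \<Longrightarrow> (a + b, u + v) \<in> G"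
    "\<And>a u r. (a,u) \<in> G \<Longrightarrow> (scaleR r a, r * u) \<in> G"
    "\<And>a u. (a,u) \<in> G \<Longrightarrow> u \<le> norm a"
    "(y, norm y) \<in> G"
  using assms unfolding hb_good_def by blast+

lemma hb_good_zero: "hb_good y G \<Longrightarrow> (0, 0) \<in> G"
  using hb_good_D(3)[of y G y "norm y" 0] hb_good_D(5)[of y G] by simp

lemma hb_extend:
  fixes y z :: "'a::real_normed_vector"
  assumes good: "hb_good y M" and nz: "\<And>u. (z, u) \<notin> M"
  shows "\<exists>M'. hb_good y M' \<and> M \<subseteq> M' \<and> M' \<noteq> M"
proof -
  note D = hb_good_D[OF good]
  have M0: "(0, 0) \<in> M" by (rule hb_good_zero[OF good])
  define L where "L = {v - norm (b - z) | b v. (b, v) \<in> M}"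
  have key: "v - norm (b - z) \<le> norm (a + z) - u" if "(a,u) \<in> M" "(b,v) \<in> M" for a u b v
  proof -
    have "u + v \<le> norm (a + b)" using D(4)[OF D(2)[OF that]] .
    also have "\<dots> = norm ((a + z) + (b - z))" by (simp add: algebra_simps)
    also have "\<dots> \<le> norm (a + z) + norm (b - z)" by (rule norm_triangle_ineq)
    finally show ?thesis by simp
  qed
  have Lne: "L \<noteq> {}" using M0 unfolding L_def by blast
  have Lbdd: "bdd_above L"
    unfolding bdd_above_def L_def using key[OF M0] by blast
  define c where "c = Sup L"
  have c_ge: "v - norm (b - z) \<le> c" if "(b,v) \<in> M" for b v
    unfolding c_def by (rule cSup_upper[OF _ Lbdd]) (use that L_def in blast)
  have c_le: "c \<le> norm (a + z) - u" if "(a,u) \<in> M" for a u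
    unfolding c_def by (rule cSup_least[OF Lne]) (use key[OF that] L_def in blast)
  define M' where "M' = {(a + t *\<^sub>R z, u + t * c) | a u t. (a,u) \<in> M}"
  have inM': "(a + t *\<^sub>R z, u + t * c) \<in> M'" if "(a,u) \<in> M" for a u t
    unfolding M'_def using that by blast
  have sub: "M \<subseteq> M'"
  proof
    fix p assume "p \<in> M"
    then obtain a u where p: "p = (a,u)" "(a,u) \<in> M" by (cases p) auto
    show "p \<in> M'" using inM'[OF p(2), of 0] p by simp
  qed
  have zc: "(z, c) \<in> M'" using inM'[OF M0, of 1] by simp
  have neq: "M' \<noteq> M" using zc nz by blast
  have good': "hb_good y M'"
    unfolding hb_good_def
  proof (intro conjI allI impI)
    fix p u v assume "(p, u) \<in> M'" "(p, v) \<in> M'"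
    then obtain a1 u1 t1 a2 u2 t2 where
      e1: "p = a1 + t1 *\<^sub>R z" "u = u1 + t1 * c" "(a1,u1) \<in> M" and
      e2: "p = a2 + t2 *\<^sub>R z" "v = u2 + t2 * c" "(a2,u2) \<in> M"
      unfolding M'_def by blast
    have tt: "t1 = t2"
    proof (rule ccontr)
      assume ne: "t1 \<noteq> t2"
      have d: "(a1 - a2, u1 - u2) \<in> M"
        using D(2)[OF e1(3) D(3)[OF e2(3), of "-1"]] by simp
      have zeq: "z = (1 / (t2 - t1)) *\<^sub>R (a1 - a2)"
      proof -
        have "a1 - a2 = (t2 - t1) *\<^sub>R z" using e1(1) e2(1) by (simp add: algebra_simps)
        then show ?thesis using ne by simp
      qed
      have "((1 / (t2 - t1)) *\<^sub>R (a1 - a2), (1 / (t2 - t1)) * (u1 - u2)) \<in> M" by (rule D(3)[OF d])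
      then have "(z, (1 / (t2 - t1)) * (u1 - u2)) \<in> M" unfolding zeq .
      then show False using nz by blast
    qed
    then have "a1 = a2" using e1(1) e2(1) by simp
    then have "u1 = u2" using D(1) e1(3) e2(3) by blast
    then show "u = v" using e1(2) e2(2) tt by simp
  next
    fix p u q v assume "(p, u) \<in> M'" "(q, v) \<in> M'"
    then obtain a1 u1 t1 a2 u2 t2 where
      e1: "p = a1 + t1 *\<^sub>R z" "u = u1 + t1 * c" "(a1,u1) \<in> M" and
      e2: "q = a2 + t2 *\<^sub>R z" "v = u2 + t2 * c" "(a2,u2) \<in> M"
      unfolding M'_def by blast
    have "(a1 + a2 + (t1 + t2) *\<^sub>R z, u1 + u2 + (t1 + t2) * c) \<in> M'"
      by (rule inM'[OF D(2)[OF e1(3) e2(3)]])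
    then show "(p + q, u + v) \<in> M'" using e1 e2 by (simp add: algebra_simps)
  next
    fix p u r assume "(p, u) \<in> M'"
    then obtain a1 u1 t1 where
      e1: "p = a1 + t1 *\<^sub>R z" "u = u1 + t1 * c" "(a1,u1) \<in> M"
      unfolding M'_def by blast
    have "(r *\<^sub>R a1 + (r * t1) *\<^sub>R z, r * u1 + (r * t1) * c) \<in> M'"
      by (rule inM'[OF D(3)[OF e1(3)]])
    then show "(r *\<^sub>R p, r * u) \<in> M'" using e1 by (simp add: algebra_simps)
  next
    fix p u assume "(p, u) \<in> M'"
    then obtain a t w where
      e: "p = a + t *\<^sub>R z" "u = w + t * c" "(a, w) \<in> M"
      unfolding M'_def by blast
    consider "t = 0" | "t > 0" | "t < 0" by linarith
    then show "u \<le> norm p"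
    proof cases
      case 1 then show ?thesis using e D(4) by simp
    next
      case 2
      have m: "((1/t) *\<^sub>R a, (1/t) * w) \<in> M" using D(3)[OF e(3)] .
      have "c \<le> norm ((1/t) *\<^sub>R a + z) - (1/t) * w" by (rule c_le[OF m])
      then have "t * c \<le> t * (norm ((1/t) *\<^sub>R a + z) - (1/t) * w)"
        using 2 by (intro mult_left_mono) auto
      also have "\<dots> = t * norm ((1/t) *\<^sub>R a + z) - w" using 2 by (simp add: algebra_simps)
      also have "t * norm ((1/t) *\<^sub>R a + z) = norm (t *\<^sub>R ((1/t) *\<^sub>R a + z))"
        using 2 by simp
      also have "t *\<^sub>R ((1/t) *\<^sub>R a + z) = a + t *\<^sub>R z"
        using 2 by (simp add: scaleR_add_right)
      finally show ?thesis using e by simp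
    next
      case 3
      define s where "s = - t"
      have s: "s > 0" using 3 s_def by simp
      have m: "((1/s) *\<^sub>R a, (1/s) * w) \<in> M" using D(3)[OF e(3)] .
      have "(1/s) * w - norm ((1/s) *\<^sub>R a - z) \<le> c" by (rule c_ge[OF m])
      then have A0: "s * ((1/s) * w - norm ((1/s) *\<^sub>R a - z)) \<le> s * c"
        using s by (intro mult_left_mono) auto
      have A1: "s * ((1/s) * w - norm ((1/s) *\<^sub>R a - z)) = w - s * norm ((1/s) *\<^sub>R a - z)"
        using s by (simp add: algebra_simps)
      have A2: "s * norm ((1/s) *\<^sub>R a - z) = norm (s *\<^sub>R ((1/s) *\<^sub>R a - z))"
        using s by simp
      have A3: "s *\<^sub>R ((1/s) *\<^sub>R a - z) = a + t *\<^sub>R z"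
        using s unfolding s_def by (simp add: scaleR_diff_right)
      have A4: "w - s * c \<le> norm (a + t *\<^sub>R z)" using A0 A1 A2 A3 by simp
      have "u = w - s * c" using e(2) unfolding s_def by simp
      then show ?thesis using A4 e(1) by simp
    qed
  next
    show "(y, norm y) \<in> M'" using sub D(5) by blast
  qed
  show ?thesis using good' sub neq by blast
qed

theorem hahn_banach_norming:
  fixes y :: "'a::real_normed_vector"
  shows "\<exists>\<phi>. linear \<phi> \<and> (\<forall>a. \<bar>\<phi> a\<bar> \<le> norm a) \<and> \<phi> y = norm y"
proof -
  define A where "A = {G. hb_good y G}"
  define G0 where "G0 = {(r *\<^sub>R y, r * norm y) | r. True}"
  have G0: "hb_good y G0"
    unfolding hb_good_def
  proof (intro conjI allI impI)
    fix a u v assume "(a, u) \<in> G0" "(a, v) \<in> G0"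
    then obtain r s where "a = r *\<^sub>R y" "u = r * norm y" "a = s *\<^sub>R y" "v = s * norm y"
      unfolding G0_def by blast
    then show "u = v"
      by (cases "y = 0") (auto simp: scaleR_cancel_right)
  next
    fix a u b v assume "(a, u) \<in> G0" "(b, v) \<in> G0"
    then obtain r s where "a = r *\<^sub>R y" "u = r * norm y" "b = s *\<^sub>R y" "v = s * norm y"
      unfolding G0_def by blast
    then show "(a + b, u + v) \<in> G0" unfolding G0_def
      by (auto intro!: exI[of _ "r + s"] simp: scaleR_add_left algebra_simps)
  next
    fix a u r assume "(a, u) \<in> G0"
    then obtain s where "a = s *\<^sub>R y" "u = s * norm y" unfolding G0_def by blast
    then show "(r *\<^sub>R a, r * u) \<in> G0" unfolding G0_def
      by (auto intro!: exI[of _ "r * s"])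
  next
    fix a u assume "(a, u) \<in> G0"
    then obtain s where "a = s *\<^sub>R y" "u = s * norm y" unfolding G0_def by blast
    then show "u \<le> norm a" by (simp add: mult_right_mono)
  next
    show "(y, norm y) \<in> G0" unfolding G0_def by (auto intro!: exI[of _ 1])
  qed
  have "\<forall>C\<in>chains A. \<exists>U\<in>A. \<forall>X\<in>C. X \<subseteq> U"
  proof
    fix C assume C: "C \<in> chains A"
    show "\<exists>U\<in>A. \<forall>X\<in>C. X \<subseteq> U"
    proof (cases "C = {}")
      case True then show ?thesis using G0 A_def by blast
    next
      case False
      have CA: "C \<subseteq> A" using C unfolding chains_def by blast
      have ch: "\<And>X Y. X \<in> C \<Longrightarrow> Y \<in> C \<Longrightarrow> X \<subseteq> Y \<or> Y \<subseteq> X"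
        using C unfolding chains_def chain_subset_def by blast
      have gX: "\<And>X. X \<in> C \<Longrightarrow> hb_good y X" using CA A_def by blast
      have two: "\<exists>X\<in>C. p \<in> X \<and> q \<in> X" if pq: "p \<in> \<Union>C" "q \<in> \<Union>C" for p q
      proof -
        obtain X Y where "X \<in> C" "Y \<in> C" "p \<in> X" "q \<in> Y" using pq by blast
        then show ?thesis using ch[of X Y] by blast
      qed
      have "hb_good y (\<Union>C)"
        unfolding hb_good_def
      proof (intro conjI allI impI)
        fix a u v assume "(a, u) \<in> \<Union>C" "(a, v) \<in> \<Union>C"
        then obtain X where "X \<in> C" "(a,u) \<in> X" "(a,v) \<in> X" using two by blast
        then show "u = v" using hb_good_D(1)[OF gX] by blast
      next
        fix a u b v assume "(a, u) \<in> \<Union>C" "(b, v) \<in> \<Union>C"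
        then obtain X where "X \<in> C" "(a,u) \<in> X" "(b,v) \<in> X" using two by blast
        then show "(a + b, u + v) \<in> \<Union>C" using hb_good_D(2)[OF gX] by blast
      next
        fix a u r assume "(a, u) \<in> \<Union>C"
        then obtain X where "X \<in> C" "(a,u) \<in> X" by blast
        then show "(r *\<^sub>R a, r * u) \<in> \<Union>C" using hb_good_D(3)[OF gX] by blast
      next
        fix a u assume "(a, u) \<in> \<Union>C"
        then obtain X where "X \<in> C" "(a,u) \<in> X" by blast
        then show "u \<le> norm a" using hb_good_D(4)[OF gX] by blast
      next
        obtain X where "X \<in> C" using False by blast
        then show "(y, norm y) \<in> \<Union>C" using hb_good_D(5)[OF gX] by blast
      qed
      then show ?thesis using A_def by blast
    qed
  qed
  from Zorn_Lemma2[OF this] obtain M where M: "M \<in> A" "\<forall>X\<in>A. M \<subseteq> X \<longrightarrow> X = M" by blast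
  have gM: "hb_good y M" using M A_def by blast
  note D = hb_good_D[OF gM]
  have tot: "\<exists>u. (z, u) \<in> M" for z
  proof (rule ccontr)
    assume "\<not> (\<exists>u. (z, u) \<in> M)"
    then obtain M' where "hb_good y M'" "M \<subseteq> M'" "M' \<noteq> M" using hb_extend[OF gM] by blast
    then show False using M A_def by blast
  qed
  define \<phi> where "\<phi> z = (THE u. (z, u) \<in> M)" for z
  have phi: "(z, \<phi> z) \<in> M" for z
  proof -
    obtain u where u: "(z, u) \<in> M" using tot by blast
    have "(THE u. (z, u) \<in> M) = u" using u D(1) by blast
    then show ?thesis using u \<phi>_def by simp
  qed
  have phi_eq: "\<phi> z = u" if "(z, u) \<in> M" for z u using D(1)[OF phi that] .
  have lin: "linear \<phi>"
  proof (rule linearI)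
    fix a b show "\<phi> (a + b) = \<phi> a + \<phi> b" using phi_eq[OF D(2)[OF phi phi]] .
  next
    fix r a show "\<phi> (r *\<^sub>R a) = r *\<^sub>R \<phi> a" using phi_eq[OF D(3)[OF phi]] by simp
  qed
  have bnd: "\<bar>\<phi> a\<bar> \<le> norm a" for a
  proof -
    have "\<phi> a \<le> norm a" using D(4)[OF phi] .
    moreover have "\<phi> (- a) \<le> norm (- a)" using D(4)[OF phi] .
    moreover have "\<phi> (- a) = - \<phi> a" using linear_neg[OF lin] .
    ultimately show ?thesis by simp
  qed
  show ?thesis using lin bnd phi_eq[OF D(5)] by blast
qed

lemma scaleC_decomp:
  "scaleC c (a::'a::cstar_algebra) = Re c *\<^sub>R a + Im c *\<^sub>R scaleC \<i> a"
proof -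
  have ceq: "c = complex_of_real (Re c) + complex_of_real (Im c) * \<i>"
    by (simp add: complex_eq_iff)
  have "scaleC c a = scaleC (complex_of_real (Re c) + complex_of_real (Im c) * \<i>) a"
    using arg_cong[OF ceq, of "\<lambda>z. scaleC z a"] .
  also have "\<dots> = scaleC (complex_of_real (Re c)) a + scaleC (complex_of_real (Im c) * \<i>) a"
    by (rule scaleC_add_left)
  also have "scaleC (complex_of_real (Im c) * \<i>) a = scaleC (complex_of_real (Im c)) (scaleC \<i> a)"
    by (rule scaleC_scaleC[symmetric])
  finally show ?thesis by (simp only: scaleC_of_real)
qed

lemma complex_norming:
  fixes y :: "'a::cstar_algebra"
  shows "\<exists>\<psi> :: 'a \<Rightarrow> complex. bounded_linear \<psi> \<and> (\<forall>c a. \<psi> (scaleC c a) = c * \<psi> a)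
           \<and> (\<forall>a. cmod (\<psi> a) \<le> norm a) \<and> Re (\<psi> y) = norm y"
proof -
  obtain \<phi> :: "'a \<Rightarrow> real" where lin: "linear \<phi>" and bnd: "\<forall>a. \<bar>\<phi> a\<bar> \<le> norm a"
    and py: "\<phi> y = norm y"
    using hahn_banach_norming[of y] by blast
  have add: "\<phi> (a + b) = \<phi> a + \<phi> b" for a b using linear_add[OF lin] .
  have scl: "\<phi> (r *\<^sub>R a) = r * \<phi> a" for r a using linear_scale[OF lin] by simp
  have phiC: "\<phi> (scaleC c a) = Re c * \<phi> a + Im c * \<phi> (scaleC \<i> a)" for c a
    using arg_cong[OF scaleC_decomp[of c a], of \<phi>] by (simp only: add scl)
  define \<psi> where "\<psi> a = Complex (\<phi> a) (- \<phi> (scaleC \<i> a))" for a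
  have ii: "scaleC \<i> (scaleC \<i> a) = - a" for a :: 'a
  proof -
    have "scaleC \<i> (scaleC \<i> a) = scaleC (-1) a" by (simp add: scaleC_scaleC)
    also have "\<dots> = - a" by (simp add: scaleC_minus_left scaleC_one)
    finally show ?thesis .
  qed
  have psiC: "\<psi> (scaleC c a) = c * \<psi> a" for c a
  proof -
    have e1: "scaleC \<i> (scaleC c a) = scaleC (\<i> * c) a" by (simp add: scaleC_scaleC)
    have p1: "\<phi> (scaleC c a) = Re c * \<phi> a + Im c * \<phi> (scaleC \<i> a)" by (rule phiC)
    have p2: "\<phi> (scaleC (\<i> * c) a) = - Im c * \<phi> a + Re c * \<phi> (scaleC \<i> a)"
      using phiC[of "\<i> * c" a] by simp
    show ?thesis unfolding \<psi>_def e1 p1 p2 by (simp add: complex_eq_iff algebra_simps)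
  qed
  have psiadd: "\<psi> (a + b) = \<psi> a + \<psi> b" for a b
    unfolding \<psi>_def scaleC_add_right add by (simp add: complex_eq_iff)
  have Repsi: "Re (\<psi> a) = \<phi> a" for a unfolding \<psi>_def by simp
  have psin: "cmod (\<psi> a) \<le> norm a" for a
  proof (cases "\<psi> a = 0")
    case True then show ?thesis by simp
  next
    case False
    define c where "c = cnj (\<psi> a) / complex_of_real (cmod (\<psi> a))"
    have cm: "cmod c = 1" unfolding c_def using False by (simp add: norm_divide)
    have "\<psi> (scaleC c a) = c * \<psi> a" by (rule psiC)
    also have "\<dots> = complex_of_real (cmod (\<psi> a))"
    proof -
      define z where "z = \<psi> a"
      define w where "w = complex_of_real (cmod z)"
      have w0: "w \<noteq> 0" using False unfolding w_def z_def by simp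
      have "cnj z * z = w^2" using complex_norm_square[of z] unfolding w_def by (simp add: mult.commute)
      then have "c * z = w^2 / w" unfolding c_def z_def[symmetric] w_def[symmetric]
        by (simp add: times_divide_eq_left)
      also have "\<dots> = w" using w0 by (simp add: power2_eq_square)
      finally show ?thesis unfolding z_def w_def .
    qed
    finally have "\<phi> (scaleC c a) = cmod (\<psi> a)" using Repsi[of "scaleC c a"] by simp
    then have "cmod (\<psi> a) \<le> norm (scaleC c a)"
      using abs_le_D1[OF bnd[rule_format, of "scaleC c a"]] by simp
    also have "\<dots> = norm a" by (simp add: norm_scaleC cm)
    finally show ?thesis .
  qed
  have bl: "bounded_linear \<psi>"
  proof (rule bounded_linear_intro[where K=1])
    show "\<psi> (a + b) = \<psi> a + \<psi> b" for a b by (rule psiadd)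
    show "\<psi> (r *\<^sub>R a) = r *\<^sub>R \<psi> a" for r a
      using psiC[of "complex_of_real r" a] by (simp add: scaleC_of_real scaleR_conv_of_real)
    show "norm (\<psi> a) \<le> norm a * 1" for a using psin by simp
  qed
  show ?thesis
  proof (intro exI[of _ \<psi>] conjI allI)
    show "bounded_linear \<psi>" by (rule bl)
    show "\<psi> (scaleC c a) = c * \<psi> a" for c a by (rule psiC)
    show "cmod (\<psi> a) \<le> norm a" for a by (rule psin)
    show "Re (\<psi> y) = norm y" using Repsi[of y] py by simp
  qed
qed

lemma neumann_summable:
  fixes x :: "'a::cstar_algebra"
  assumes "norm x < 1" shows "summable (\<lambda>n. x ^ n)"
proof -
  have sn: "summable (\<lambda>n. norm (x ^ n))"
    by (rule summable_comparison_test[where g="\<lambda>n. norm x ^ n"])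
       (use assms norm_power_ineq in \<open>auto intro: summable_geometric\<close>)
  then show ?thesis by (rule summable_norm_cancel)
qed

lemma bl_scaleC_left: "bounded_linear (\<lambda>l::complex. scaleC l (x::'a::cstar_algebra))"
proof (rule bounded_linear_intro[where K="norm x"])
  show "scaleC (a + b) x = scaleC a x + scaleC b x" for a b by (rule scaleC_add_left)
  show "scaleC (r *\<^sub>R a) x = r *\<^sub>R scaleC a x" for r a
  proof -
    have "scaleC (r *\<^sub>R a) x = scaleC (complex_of_real r * a) x" by (simp add: scaleR_conv_of_real)
    also have "\<dots> = scaleC (complex_of_real r) (scaleC a x)" by (rule scaleC_scaleC[symmetric])
    also have "\<dots> = r *\<^sub>R scaleC a x" by (rule scaleC_of_real)
    finally show ?thesis .
  qed
  show "norm (scaleC a x) \<le> norm a * norm x" for a by (simp add: norm_scaleC)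
qed

lemma isCont_R:
  fixes x :: "'a::cstar_algebra"
  assumes "cinvertible (1 - scaleC l0 x)"
  shows "isCont (\<lambda>l. cinv (1 - scaleC l x)) l0"
proof -
  have c1: "isCont (\<lambda>l. scaleC l x) l0"
    using bounded_linear.isCont[OF bl_scaleC_left[of x] continuous_ident] by simp
  have c2: "isCont (\<lambda>l. 1 - scaleC l x) l0"
    by (rule continuous_diff[OF continuous_const c1])
  show ?thesis by (rule isCont_o2[OF c2 isCont_cinv[OF assms]])
qed

lemma scaleC_power: "(scaleC u (x::'a::cstar_algebra)) ^ k = scaleC (u ^ k) (x ^ k)"
proof (induction k)
  case 0 then show ?case by (simp add: scaleC_one)
next
  case (Suc k)
  have "scaleC u x ^ Suc k = scaleC u x * scaleC (u ^ k) (x ^ k)" by (simp add: Suc)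
  also have "\<dots> = scaleC (u ^ Suc k) (x ^ Suc k)"
    by (simp add: mult_scaleC_left mult_scaleC_right scaleC_scaleC mult.commute)
  finally show ?case .
qed

lemma resolvent_diff:
  fixes A B :: "'a::cstar_algebra"
  assumes "cinvertible A" "cinvertible B"
  shows "cinv A - cinv B = cinv A * (B - A) * cinv B"
proof -
  have "cinv A * (B - A) * cinv B = cinv A * (B * cinv B) - (cinv A * A) * cinv B"
    by (simp add: algebra_simps mult.assoc)
  also have "\<dots> = cinv A - cinv B" using cinv_props[OF assms(1)] cinv_props[OF assms(2)] by simp
  finally show ?thesis by simp
qed

lemma power_bound:
  fixes x :: "'a::cstar_algebra"
  assumes inv: "\<And>c. r < cmod c \<Longrightarrow> cinvertible (x - sc c)"
    and r: "r \<ge> 0" and s: "s > 0" "s * r < 1"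
  shows "\<exists>M. \<forall>n. norm (x ^ n) \<le> M / s ^ n"
proof -
  define U where "U = {l::complex. cmod l * r < 1}"
  have openU: "open U" unfolding U_def
    by (rule open_Collect_less) (intro continuous_intros)+
  have invU: "cinvertible (1 - scaleC l x)" if lU: "l \<in> U" for l
  proof (cases "l = 0")
    case True then show ?thesis by simp
  next
    case False
    have "cmod l * r < 1" using lU U_def by simp
    moreover have cl: "cmod l > 0" using False by simp
    ultimately have "r < 1 / cmod l" by (simp add: field_simps)
    then have "r < cmod (inverse l)" by (simp add: norm_inverse divide_inverse)
    then have i: "cinvertible (x - sc (inverse l))" by (rule inv)
    have "scaleC (- l) (x - sc (inverse l)) = 1 - scaleC l x"
      using False by (simp add: scaleC_diff_right scaleC_scaleC scaleC_minus_left scaleC_one)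
    then show ?thesis using cinvertible_scaleC[OF i, of "-l"] False by simp
  qed
  define R where "R l = cinv (1 - scaleC l x)" for l
  have contR: "isCont R l" if "l \<in> U" for l
    unfolding R_def by (rule isCont_R[OF invU[OF that]])
  have cbU: "cball 0 s \<subseteq> U"
  proof
    fix l :: complex assume "l \<in> cball 0 s"
    then have "cmod l \<le> s" by simp
    then have "cmod l * r \<le> s * r" using r by (rule mult_right_mono)
    then show "l \<in> U" using s U_def by simp
  qed
  have "continuous_on (sphere 0 s) R"
    by (rule continuous_at_imp_continuous_on) (use contR cbU sphere_cball in blast)
  then have "compact (R ` sphere 0 s)" by (rule compact_continuous_image) simp
  then obtain M where M: "\<forall>v\<in>R ` sphere 0 s. norm v \<le> M"
    using compact_imp_bounded bounded_iff by metis
  show ?thesis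
  proof (intro exI[of _ M] allI)
    fix n
    obtain \<psi> :: "'a \<Rightarrow> complex" where bl: "bounded_linear \<psi>"
      and psiC: "\<forall>c a. \<psi> (scaleC c a) = c * \<psi> a" and psin: "\<forall>a. cmod (\<psi> a) \<le> norm a"
      and Rpsi: "Re (\<psi> (x ^ n)) = norm (x ^ n)"
      using complex_norming[of "x ^ n"] by blast
    define g where "g l = \<psi> (R l)" for l
    have deriv: "(g has_field_derivative \<psi> (R l0 * x * R l0)) (at l0)" if l0: "l0 \<in> U" for l0
    proof -
      have quot: "\<psi> (R l * x * R l0) = (g l - g l0) / (l - l0)"
        if lU: "l \<in> U" and ne: "l \<noteq> l0" for l
      proof -
        have "R l - R l0 = R l * ((1 - scaleC l0 x) - (1 - scaleC l x)) * R l0"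
          unfolding R_def by (rule resolvent_diff[OF invU[OF lU] invU[OF l0]])
        also have "(1 - scaleC l0 x) - (1 - scaleC l x) = scaleC (l - l0) x"
          by (simp add: scaleC_diff_left)
        also have "R l * scaleC (l - l0) x * R l0 = scaleC (l - l0) (R l * x * R l0)"
          by (simp add: mult_scaleC_left mult_scaleC_right)
        finally have "R l - R l0 = scaleC (l - l0) (R l * x * R l0)" .
        then have "g l - g l0 = (l - l0) * \<psi> (R l * x * R l0)"
          unfolding g_def using psiC linear_diff[OF bounded_linear.linear[OF bl], of "R l" "R l0"] by simp
        then show ?thesis using ne by simp
      qed
      have tR: "(R \<longlongrightarrow> R l0) (at l0)" using contR[OF l0] unfolding isCont_def .
      have lim: "((\<lambda>l. \<psi> (R l * x * R l0)) \<longlongrightarrow> \<psi> (R l0 * x * R l0)) (at l0)"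
        by (intro bounded_linear.tendsto[OF bl] tendsto_mult tR tendsto_const)
      have "((\<lambda>l. (g l - g l0) / (l - l0)) \<longlongrightarrow> \<psi> (R l0 * x * R l0)) (at l0)"
        by (rule Lim_transform_within_open[OF lim openU l0]) (rule quot)
      then show ?thesis by (simp add: has_field_derivative_iff)
    qed
    have holo: "g holomorphic_on U"
      using deriv by (auto simp: holomorphic_on_open[OF openU])
    have fps: "g has_fps_expansion (Abs_fps (\<lambda>k. \<psi> (x ^ k)))"
    proof (rule has_fps_expansionI)
      define S where "S = ball (0::complex) (1 / (norm x + 1))"
      have "open S" unfolding S_def by auto
      moreover have "0 \<in> S" unfolding S_def using norm_ge_zero[of x]
        by (simp add: add_nonneg_pos)
      moreover have "(\<lambda>k. fps_nth (Abs_fps (\<lambda>k. \<psi> (x ^ k))) k * u ^ k) sums g u" if uS: "u \<in> S" for u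
      proof -
        have pos: "norm x + 1 > 0" using norm_ge_zero[of x] by linarith
        have "cmod u < 1 / (norm x + 1)" using uS S_def by simp
        then have "cmod u * (norm x + 1) < 1" using pos by (simp add: field_simps)
        moreover have "cmod u * norm x \<le> cmod u * (norm x + 1)" by (intro mult_left_mono) auto
        ultimately have nu: "norm (scaleC u x) < 1" by (simp add: norm_scaleC)
        have "(\<lambda>k. scaleC u x ^ k) sums (\<Sum>k. scaleC u x ^ k)"
          using summable_sums[OF neumann_summable[OF nu]] .
        then have "(\<lambda>k. scaleC u x ^ k) sums R u"
          unfolding R_def using neumann(2)[OF nu] by simp
        then have "(\<lambda>k. \<psi> (scaleC u x ^ k)) sums g u"
          unfolding g_def by (rule bounded_linear.sums[OF bl])
        moreover have "\<psi> (scaleC u x ^ k) = fps_nth (Abs_fps (\<lambda>k. \<psi> (x ^ k))) k * u ^ k" for k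
          by (simp add: scaleC_power psiC mult.commute)
        ultimately show ?thesis by simp
      qed
      ultimately show "eventually (\<lambda>u. (\<lambda>k. fps_nth (Abs_fps (\<lambda>k. \<psi> (x ^ k))) k * u ^ k) sums g u) (nhds 0)"
        unfolding eventually_nhds by blast
    qed
    have coeff: "\<psi> (x ^ n) = (deriv ^^ n) g 0 / fact n"
      using fps_nth_fps_expansion[OF fps, of n] by simp
    have CI: "norm ((deriv ^^ n) g 0) \<le> fact n * M / s ^ n"
    proof (rule Cauchy_inequality)
      have "ball 0 s \<subseteq> U" using cbU ball_subset_cball by blast
      then show "g holomorphic_on ball 0 s" using holo by (rule holomorphic_on_subset[rotated])
      show "continuous_on (cball 0 s) g"
        using holomorphic_on_imp_continuous_on[OF holo] cbU by (rule continuous_on_subset)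
      show "0 < s" by (rule s)
      fix l :: complex assume "norm (0 - l) = s"
      then have "l \<in> sphere 0 s" by simp
      then have "norm (R l) \<le> M" using M by blast
      moreover have "norm (g l) \<le> norm (R l)" unfolding g_def using psin by simp
      ultimately show "norm (g l) \<le> M" by linarith
    qed
    have "cmod (\<psi> (x ^ n)) = norm ((deriv ^^ n) g 0) / fact n"
      unfolding coeff by (simp add: norm_divide)
    also have "\<dots> \<le> (fact n * M / s ^ n) / fact n"
      using CI by (intro divide_right_mono) auto
    also have "\<dots> = M / s ^ n" by simp
    finally have "cmod (\<psi> (x ^ n)) \<le> M / s ^ n" .
    moreover have "norm (x ^ n) \<le> cmod (\<psi> (x ^ n))"
      using complex_Re_le_cmod[of "\<psi> (x ^ n)"] Rpsi by simp
    ultimately show "norm (x ^ n) \<le> M / s ^ n" by linarith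
  qed
qed

lemma sa_norm_pow2:
  fixes h :: "'a::cstar_algebra"
  assumes sa: "adj h = h"
  shows "norm (h ^ (2 ^ m)) = norm h ^ (2 ^ m)"
proof (induction m)
  case 0 then show ?case by simp
next
  case (Suc m)
  have sam: "adj (h ^ (2 ^ m)) = h ^ (2 ^ m)" by (simp add: adj_power sa)
  have "h ^ (2 ^ Suc m) = h ^ (2 ^ m) * h ^ (2 ^ m)"
    by (simp add: power_add[symmetric] mult_2)
  then have "norm (h ^ (2 ^ Suc m)) = (norm (h ^ (2 ^ m)))^2"
    using norm_sa_square[OF sam] by simp
  also have "\<dots> = norm h ^ (2 ^ Suc m)" using Suc by (simp add: power_mult[symmetric] mult.commute)
  finally show ?case .
qed

theorem sa_norm_le:
  fixes h :: "'a::cstar_algebra"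
  assumes sa: "adj h = h" and r: "r \<ge> 0"
    and inv: "\<And>c. r < cmod c \<Longrightarrow> cinvertible (h - sc c)"
  shows "norm h \<le> r"
proof (rule ccontr)
  assume "\<not> norm h \<le> r"
  then have hr: "norm h > r" by simp
  define s where "s = 2 / (norm h + r)"
  have s0: "s > 0" using hr r s_def by simp
  have sr: "s * r < 1" using hr r unfolding s_def by (simp add: field_simps)
  have sh: "s * norm h > 1" using hr r unfolding s_def by (simp add: field_simps)
  obtain M where M: "\<forall>n. norm (h ^ n) \<le> M / s ^ n" using power_bound[OF inv r s0 sr] by blast
  define q where "q = s * norm h"
  have q1: "q > 1" using sh q_def by simp
  have bnd: "q ^ (2 ^ m) \<le> M" for m
  proof -
    have "norm h ^ (2 ^ m) \<le> M / s ^ (2 ^ m)" using M sa_norm_pow2[OF sa, of m] by metis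
    then have "s ^ (2 ^ m) * norm h ^ (2 ^ m) \<le> M" using s0 by (simp add: field_simps)
    then show ?thesis unfolding q_def by (simp add: power_mult_distrib)
  qed
  obtain m where m: "M < q ^ m" using real_arch_pow[OF q1] by blast
  have "m \<le> 2 ^ m" using less_exp[of m] by simp
  then have "q ^ m \<le> q ^ (2 ^ m)" using q1 by (intro power_increasing) auto
  then show False using m bnd[of m] by linarith
qed

section \<open>Positivity via norms\<close>

lemma adj_of_real [simp]: "adj (of_real t :: 'a::cstar_algebra) = of_real t"
  by (simp add: of_real_def adj_scaleR)

lemma pos_norm:
  fixes a :: "'a::cstar_algebra"
  assumes pos: "cpositive a" and t: "norm a \<le> t"
  shows "norm (of_real t - a) \<le> t"
proof (rule sa_norm_le)
  have sa: "adj a = a" using pos unfolding cpositive_def by simp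
  show "adj (of_real t - a) = of_real t - a" by (simp add: adj_diff sa)
  show t0: "0 \<le> t" using t norm_ge_zero[of a] by linarith
  fix c :: complex assume tc: "t < cmod c"
  show "cinvertible (of_real t - a - sc c)"
  proof -
    have notin: "complex_of_real t - c \<notin> cspectrum a"
    proof
      assume sp: "complex_of_real t - c \<in> cspectrum a"
      then obtain u where u: "complex_of_real t - c = complex_of_real u" "u \<ge> 0"
        using pos unfolding cpositive_def by auto
      have "cmod (complex_of_real t - c) \<le> norm a" using cspectrum_norm[OF sp] .
      then have "u \<le> t" using u t by simp
      have ceq: "c = complex_of_real (t - u)" using u(1) by (simp add: algebra_simps)
      have "cmod c = \<bar>t - u\<bar>" unfolding ceq norm_of_real ..
      also have "\<dots> \<le> t" using \<open>u \<le> t\<close> u(2) by simp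
      finally show False using tc by simp
    qed
    then have i: "cinvertible (a - sc (complex_of_real t - c))" by (simp add: not_spec)
    have eq: "of_real t - a - sc c = - (a - sc (complex_of_real t - c))"
      by (simp add: sc_diff sc_real)
    show ?thesis unfolding eq by (rule cinvertible_uminus[OF i])
  qed
qed

lemma pos_from_norm:
  fixes a :: "'a::cstar_algebra"
  assumes sa: "adj a = a" and n: "norm (of_real t - a) \<le> t"
  shows "cpositive a"
proof (rule cpositiveI[OF sa])
  have t0: "t \<ge> 0" using n norm_ge_zero[of "of_real t - a"] by linarith
  fix c :: complex assume c: "c \<notin> complex_of_real ` {0..}"
  show "cinvertible (a - sc c)"
  proof (cases "Im c = 0")
    case False
    then have "c \<notin> cspectrum a" using sa_spec_real[OF sa] by blast
    then show ?thesis by (simp add: not_spec)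
  next
    case True
    then have ceq: "c = complex_of_real (Re c)" by (simp add: complex_eq_iff)
    have neg: "Re c < 0"
    proof (rule ccontr)
      assume "\<not> Re c < 0"
      then have "c \<in> complex_of_real ` {0..}" using ceq by (intro image_eqI[of _ _ "Re c"]) auto
      then show False using c by simp
    qed
    define k where "k = t - Re c"
    have k: "k > 0" "k > t" using t0 neg k_def by auto
    define y where "y = (1 / k) *\<^sub>R (of_real t - a)"
    have ny: "norm y < 1"
    proof -
      have "norm y = norm (of_real t - a) / k" using k unfolding y_def by simp
      also have "\<dots> \<le> t / k" using n k by (intro divide_right_mono) auto
      also have "\<dots> < 1" using k by simp
      finally show ?thesis .
    qed
    have "a - sc c = k *\<^sub>R (1 - y)"
    proof -
      have "a - sc c = a - of_real (Re c)" using ceq sc_real[of "Re c", where 'a='a] by metis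
      also have "\<dots> = k *\<^sub>R 1 - (of_real t - a)" unfolding k_def
        by (simp add: of_real_def scaleR_diff_left)
      also have "\<dots> = k *\<^sub>R (1 - y)" unfolding y_def using k by (simp add: scaleR_diff_right)
      finally show ?thesis .
    qed
    moreover have "cinvertible (k *\<^sub>R (1 - y))"
      using cinvertible_scaleC[OF neumann(1)[OF ny], of "complex_of_real k"] k
      by (simp add: scaleC_of_real)
    ultimately show ?thesis by simp
  qed
qed

lemma cpositive_scale:
  fixes p :: "'a::cstar_algebra"
  assumes pos: "cpositive p" and s: "s > 0"
  shows "cpositive (s *\<^sub>R p)"
proof (rule cpositiveI)
  show "adj (s *\<^sub>R p) = s *\<^sub>R p" using pos unfolding cpositive_def by (simp add: adj_scaleR)
  fix c :: complex assume c: "c \<notin> complex_of_real ` {0..}"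
  have c': "c / complex_of_real s \<notin> complex_of_real ` {0..}"
  proof
    assume "c / complex_of_real s \<in> complex_of_real ` {0..}"
    then obtain u where "c / complex_of_real s = complex_of_real u" "u \<ge> 0" by auto
    then have "c = complex_of_real (s * u)" using s by (simp add: field_simps)
    moreover have "s * u \<ge> 0" using s \<open>u \<ge> 0\<close> by simp
    ultimately have "c \<in> complex_of_real ` {0..}" by blast
    then show False using c by simp
  qed
  have i: "cinvertible (p - sc (c / complex_of_real s))" by (rule cpositive_invertible[OF pos c'])
  have "s *\<^sub>R p - sc c = scaleC (complex_of_real s) (p - sc (c / complex_of_real s))"
    using s by (simp add: scaleC_diff_right scaleC_scaleC scaleC_of_real)
  then show "cinvertible (s *\<^sub>R p - sc c)"
    using cinvertible_scaleC[OF i, of "complex_of_real s"] s by simp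
qed

section \<open>Square root coefficients\<close>

function sqc :: "nat \<Rightarrow> real" where
  "sqc n = (if n = 0 then 0 else if n = 1 then 1/2
            else (1/2) * (\<Sum>i\<in>{1..<n}. sqc i * sqc (n - i)))"
  by auto
termination by (relation "Wellfounded.measure (\<lambda>n. n)") auto

declare sqc.simps [simp del]

lemma sqc_0 [simp]: "sqc 0 = 0" by (simp add: sqc.simps)
lemma sqc_1 [simp]: "sqc 1 = 1/2" by (simp add: sqc.simps)
lemma sqc_Suc0 [simp]: "sqc (Suc 0) = 1/2" by (simp add: sqc.simps)

lemma sqc_nonneg: "sqc n \<ge> 0"
proof (induction n rule: less_induct)
  case (less n)
  show ?case
  proof (cases "n \<le> 1")
    case True then show ?thesis by (cases n) (auto simp: sqc.simps)
  next
    case False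
    have "(\<Sum>i\<in>{1..<n}. sqc i * sqc (n - i)) \<ge> 0"
      by (intro sum_nonneg mult_nonneg_nonneg less) auto
    then show ?thesis using False by (simp add: sqc.simps[of n])
  qed
qed

lemma sqc_conv: "(\<Sum>i\<le>n. sqc i * sqc (n - i)) = 2 * sqc n - (if n = 1 then 1 else 0)"
proof (cases "n = 0")
  case True then show ?thesis by simp
next
  case False
  have split: "(\<Sum>i\<le>n. sqc i * sqc (n - i)) = (\<Sum>i\<in>{1..<n}. sqc i * sqc (n - i))"
  proof -
    have "(\<Sum>i\<le>n. sqc i * sqc (n - i)) = (\<Sum>i<n. sqc i * sqc (n - i)) + sqc n * sqc 0"
      using False by (cases n) (simp_all add: lessThan_Suc_atMost[symmetric])
    also have "(\<Sum>i<n. sqc i * sqc (n - i)) = sqc 0 * sqc n + (\<Sum>i\<in>{1..<n}. sqc i * sqc (n - i))"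
      using False by (simp add: lessThan_atLeast0 sum.atLeast_Suc_lessThan)
    finally show ?thesis by simp
  qed
  show ?thesis
  proof (cases "n = 1")
    case True then show ?thesis using split by simp
  next
    case n1: False
    have "sqc n = (1/2) * (\<Sum>i\<in>{1..<n}. sqc i * sqc (n - i))"
      using False n1 by (simp add: sqc.simps[of n])
    then show ?thesis using split n1 by simp
  qed
qed

lemma sqc_partial_le: "(\<Sum>i<N. sqc i) \<le> 1"
proof (induction N)
  case 0 then show ?case by simp
next
  case (Suc N)
  define B where "B = (\<Sum>i<N. sqc i)"
  define B' where "B' = (\<Sum>i<Suc N. sqc i)"
  have B0: "B \<ge> 0" "B' \<ge> 0" unfolding B_def B'_def by (rule sum_nonneg, rule sqc_nonneg)+
  define f where "f = (\<lambda>(i::nat, j::nat). sqc i * sqc j)"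
  define T where "T = {(i::nat, j::nat). i + j \<le> N}"
  define P where "P = {..N} \<times> {..<N}"
  have finT: "finite T"
  proof -
    have "T \<subseteq> {..N} \<times> {..N}" unfolding T_def by auto
    then show ?thesis by (rule finite_subset) simp
  qed
  have f0: "f p \<ge> 0" for p unfolding f_def by (cases p) (simp add: sqc_nonneg)
  have "(\<Sum>k\<le>N. \<Sum>i\<le>k. sqc i * sqc (k - i)) = sum f T"
    unfolding f_def T_def by (rule sum.triangle_reindex_eq[symmetric])
  also have "\<dots> = sum f (T \<inter> P)"
  proof (rule sum.mono_neutral_right[OF finT])
    show "T \<inter> P \<subseteq> T" by blast
    show "\<forall>p\<in>T - T \<inter> P. f p = 0"
    proof
      fix p assume "p \<in> T - T \<inter> P"
      then obtain i j where p: "p = (i,j)" "i + j \<le> N" "\<not> (i \<le> N \<and> j < N)"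
        unfolding T_def P_def by auto
      then have "i = 0" by auto
      then show "f p = 0" unfolding f_def p by simp
    qed
  qed
  also have "\<dots> \<le> sum f P"
    by (rule sum_mono2) (auto simp: P_def f0)
  also have "\<dots> = (\<Sum>i\<le>N. sqc i) * (\<Sum>j<N. sqc j)"
    unfolding P_def f_def by (simp add: sum_product sum.cartesian_product)
  also have "\<dots> = B' * B" unfolding B_def B'_def by (simp add: lessThan_Suc_atMost)
  finally have c1: "(\<Sum>k\<le>N. \<Sum>i\<le>k. sqc i * sqc (k - i)) \<le> B' * B" .
  have "(\<Sum>k\<le>N. \<Sum>i\<le>k. sqc i * sqc (k - i)) = (\<Sum>k\<le>N. 2 * sqc k - (if k = 1 then 1 else 0))"
    by (simp add: sqc_conv)
  also have "\<dots> = 2 * B' - (if 1 \<le> N then 1 else 0)"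
    unfolding B'_def by (simp add: sum_subtractf sum_distrib_left[symmetric] lessThan_Suc_atMost)
  finally have c2: "2 * B' - (if 1 \<le> N then 1 else 0) \<le> B' * B" using c1 by simp
  have IH: "B \<le> 1" using Suc B_def by simp
  show ?case
  proof (cases "1 \<le> N")
    case True
    have "B' * B \<le> B'" using IH B0 by (simp add: mult_left_le)
    then show ?thesis using c2 True B'_def by simp
  next
    case False
    then have "N = 0" by simp
    then show ?thesis by simp
  qed
qed

lemma sqc_summable: "summable sqc"
  by (rule summableI_nonneg_bounded[OF sqc_nonneg sqc_partial_le])

lemma sqc_suminf_le: "suminf sqc \<le> 1"
  by (rule suminf_le_const[OF sqc_summable sqc_partial_le])

definition sqF :: "'a::cstar_algebra \<Rightarrow> 'a" where
  "sqF b = (\<Sum>n. sqc n *\<^sub>R b ^ n)"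

definition Root :: "'a::cstar_algebra \<Rightarrow> 'a" where
  "Root b = 1 - sqF b"

lemma sqF_norm_summable:
  fixes b :: "'a::cstar_algebra"
  assumes "norm b \<le> 1"
  shows "summable (\<lambda>n. norm (sqc n *\<^sub>R b ^ n))"
proof (rule summable_comparison_test[where g=sqc])
  show "summable sqc" by (rule sqc_summable)
  have "norm (norm (sqc n *\<^sub>R b ^ n)) \<le> sqc n" for n
  proof -
    have "norm (b ^ n) \<le> norm b ^ n" by (rule norm_power_ineq)
    also have "\<dots> \<le> 1" using assms by (intro power_le_one) auto
    finally have "sqc n * norm (b ^ n) \<le> sqc n * 1" using sqc_nonneg[of n] by (intro mult_left_mono) auto
    then show ?thesis using sqc_nonneg[of n] by simp
  qed
  then show "\<exists>N. \<forall>n\<ge>N. norm (norm (sqc n *\<^sub>R b ^ n)) \<le> sqc n" by blast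
qed

lemma sqF_summable:
  fixes b :: "'a::cstar_algebra"
  assumes "norm b \<le> 1" shows "summable (\<lambda>n. sqc n *\<^sub>R b ^ n)"
  using summable_norm_cancel[OF sqF_norm_summable[OF assms]] .

lemma sqF_norm:
  fixes b :: "'a::cstar_algebra"
  assumes nb: "norm b \<le> 1"
  shows "norm (sqF b) \<le> 1"
proof -
  have "norm (sqF b) \<le> (\<Sum>n. norm (sqc n *\<^sub>R b ^ n))"
    unfolding sqF_def by (rule summable_norm[OF sqF_norm_summable[OF nb]])
  also have "\<dots> \<le> (\<Sum>n. sqc n)"
  proof (rule suminf_le)
    show "norm (sqc n *\<^sub>R b ^ n) \<le> sqc n" for n
    proof -
      have "norm (b ^ n) \<le> norm b ^ n" by (rule norm_power_ineq)
      also have "\<dots> \<le> 1" using nb by (intro power_le_one) auto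
      finally have "sqc n * norm (b ^ n) \<le> sqc n * 1" using sqc_nonneg[of n] by (intro mult_left_mono) auto
      then show ?thesis using sqc_nonneg[of n] by simp
    qed
  qed (use sqF_norm_summable[OF nb] sqc_summable in auto)
  also have "\<dots> \<le> 1" by (rule sqc_suminf_le)
  finally show ?thesis .
qed

lemma sqF_square:
  fixes b :: "'a::cstar_algebra"
  assumes nb: "norm b \<le> 1"
  shows "sqF b * sqF b = 2 *\<^sub>R sqF b - b"
proof -
  have "sqF b * sqF b = (\<Sum>k. \<Sum>i\<le>k. (sqc i *\<^sub>R b ^ i) * (sqc (k - i) *\<^sub>R b ^ (k - i)))"
    unfolding sqF_def by (rule Cauchy_product[OF sqF_norm_summable[OF nb] sqF_norm_summable[OF nb]])
  also have "\<dots> = (\<Sum>k. 2 *\<^sub>R (sqc k *\<^sub>R b ^ k) - (if k = 1 then b else 0))"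
  proof (rule suminf_cong)
    fix k
    have "(\<Sum>i\<le>k. (sqc i *\<^sub>R b ^ i) * (sqc (k - i) *\<^sub>R b ^ (k - i)))
          = (\<Sum>i\<le>k. (sqc i * sqc (k - i)) *\<^sub>R b ^ k)"
    proof (rule sum.cong[OF refl])
      fix i assume "i \<in> {..k}"
      then have "b ^ i * b ^ (k - i) = b ^ k" by (simp add: power_add[symmetric])
      then show "(sqc i *\<^sub>R b ^ i) * (sqc (k - i) *\<^sub>R b ^ (k - i)) = (sqc i * sqc (k - i)) *\<^sub>R b ^ k"
        by simp
    qed
    also have "\<dots> = (\<Sum>i\<le>k. sqc i * sqc (k - i)) *\<^sub>R b ^ k" by (simp add: scaleR_sum_left)
    also have "\<dots> = (2 * sqc k - (if k = 1 then 1 else 0)) *\<^sub>R b ^ k" by (simp only: sqc_conv)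
    also have "\<dots> = 2 *\<^sub>R (sqc k *\<^sub>R b ^ k) - (if k = 1 then b else 0)"
      by (simp add: scaleR_diff_left)
    finally show "(\<Sum>i\<le>k. (sqc i *\<^sub>R b ^ i) * (sqc (k - i) *\<^sub>R b ^ (k - i)))
        = 2 *\<^sub>R (sqc k *\<^sub>R b ^ k) - (if k = 1 then b else 0)" .
  qed
  also have "\<dots> = 2 *\<^sub>R sqF b - b"
  proof -
    have s1: "(\<lambda>k. 2 *\<^sub>R (sqc k *\<^sub>R b ^ k)) sums (2 *\<^sub>R sqF b)"
      unfolding sqF_def by (rule sums_scaleR_right[OF summable_sums[OF sqF_summable[OF nb]]])
    have s2: "(\<lambda>k. if k = 1 then b else 0) sums b" using sums_single[of 1 "\<lambda>_. b"] by simp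
    show ?thesis using sums_unique[OF sums_diff[OF s1 s2]] by simp
  qed
  finally show ?thesis .
qed

lemma Root_square:
  fixes b :: "'a::cstar_algebra"
  assumes nb: "norm b \<le> 1"
  shows "Root b * Root b = 1 - b"
proof -
  have "Root b * Root b = 1 - 2 *\<^sub>R sqF b + sqF b * sqF b"
    unfolding Root_def by (simp add: algebra_simps scaleR_2)
  also have "\<dots> = 1 - b" using sqF_square[OF nb] by simp
  finally show ?thesis .
qed

lemma Root_adj:
  fixes b :: "'a::cstar_algebra"
  assumes sa: "adj b = b" and nb: "norm b \<le> 1"
  shows "adj (Root b) = Root b"
proof -
  have "adj (sqF b) = (\<Sum>n. adj (sqc n *\<^sub>R b ^ n))"
    unfolding sqF_def by (rule bounded_linear.suminf[OF bounded_linear_adj sqF_summable[OF nb]])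
  also have "\<dots> = sqF b" unfolding sqF_def by (simp add: adj_scaleR adj_power sa)
  finally show ?thesis unfolding Root_def by (simp add: adj_diff)
qed

lemma commute_power: "y * b = b * (y::'a::cstar_algebra) \<Longrightarrow> y * b ^ n = b ^ n * y"
proof (induction n)
  case 0 then show ?case by simp
next
  case (Suc n)
  have "y * b ^ Suc n = (y * b) * b ^ n" by (simp add: mult.assoc)
  also have "\<dots> = b * (y * b ^ n)" using Suc by (simp add: mult.assoc)
  also have "\<dots> = b ^ Suc n * y" using Suc by (simp add: mult.assoc)
  finally show ?case .
qed

lemma Root_comm:
  fixes b y :: "'a::cstar_algebra"
  assumes c: "y * b = b * y" and nb: "norm b \<le> 1"
  shows "y * Root b = Root b * y"
proof -
  have "y * sqF b = (\<Sum>n. y * (sqc n *\<^sub>R b ^ n))"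
    unfolding sqF_def by (rule suminf_mult[OF sqF_summable[OF nb], symmetric])
  also have "\<dots> = (\<Sum>n. (sqc n *\<^sub>R b ^ n) * y)"
    using commute_power[OF c] by simp
  also have "\<dots> = sqF b * y"
    unfolding sqF_def by (rule suminf_mult2[OF sqF_summable[OF nb], symmetric])
  finally show ?thesis unfolding Root_def by (simp add: algebra_simps)
qed

lemma Root_pos:
  fixes b :: "'a::cstar_algebra"
  assumes sa: "adj b = b" and nb: "norm b \<le> 1"
  shows "cpositive (Root b)"
proof (rule pos_from_norm[where t=1])
  show "adj (Root b) = Root b" by (rule Root_adj[OF sa nb])
  show "norm (of_real 1 - Root b) \<le> 1" unfolding Root_def using sqF_norm[OF nb] by simp
qed

definition csqrt :: "'a::cstar_algebra \<Rightarrow> 'a" where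
  "csqrt c = (if c = 0 then 0 else sqrt (norm c) *\<^sub>R Root (1 - (1 / norm c) *\<^sub>R c))"

lemma csqrt_props:
  fixes c :: "'a::cstar_algebra"
  assumes pos: "cpositive c"
  shows "cpositive (csqrt c)" "csqrt c * csqrt c = c"
    "\<And>y. y * c = c * y \<Longrightarrow> y * csqrt c = csqrt c * y"
proof -
  have sa: "adj c = c" using pos unfolding cpositive_def by simp
  have "cpositive (csqrt c) \<and> csqrt c * csqrt c = c \<and> (\<forall>y. y * c = c * y \<longrightarrow> y * csqrt c = csqrt c * y)"
  proof (cases "c = 0")
    case True then show ?thesis by (simp add: csqrt_def cpositive_zero)
  next
    case False
    define t where "t = norm c"
    have t: "t > 0" using False t_def by simp
    define b where "b = 1 - (1 / t) *\<^sub>R c"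
    have sab: "adj b = b" unfolding b_def by (simp add: adj_diff adj_scaleR sa)
    have nb: "norm b \<le> 1"
    proof -
      have "b = (1 / t) *\<^sub>R (of_real t - c)" unfolding b_def using t
        by (simp add: of_real_def scaleR_diff_right)
      then have "norm b = (1 / t) * norm (of_real t - c)" using t by simp
      also have "\<dots> \<le> (1 / t) * t" using pos_norm[OF pos, of t] t_def t
        by (intro mult_left_mono) auto
      also have "\<dots> = 1" using t by simp
      finally show ?thesis .
    qed
    have cs: "csqrt c = sqrt t *\<^sub>R Root b" unfolding csqrt_def b_def t_def using False by simp
    have p1: "cpositive (csqrt c)" unfolding cs
      by (rule cpositive_scale[OF Root_pos[OF sab nb]]) (use t in simp)
    have p2: "csqrt c * csqrt c = c"
    proof -
      have "csqrt c * csqrt c = (sqrt t * sqrt t) *\<^sub>R (Root b * Root b)" unfolding cs by simp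
      also have "\<dots> = t *\<^sub>R (1 - b)" using t Root_square[OF nb] by simp
      also have "\<dots> = c" unfolding b_def using t by simp
      finally show ?thesis .
    qed
    have p3: "y * csqrt c = csqrt c * y" if yc: "y * c = c * y" for y
    proof -
      have "y * b = b * y" unfolding b_def using yc by (simp add: algebra_simps)
      then have "y * Root b = Root b * y" using Root_comm nb by blast
      then show ?thesis unfolding cs by simp
    qed
    show ?thesis using p1 p2 p3 by blast
  qed
  then show "cpositive (csqrt c)" "csqrt c * csqrt c = c"
    "\<And>y. y * c = c * y \<Longrightarrow> y * csqrt c = csqrt c * y" by blast+
qed

lemma cpositive_sa: "cpositive p \<Longrightarrow> adj p = p"
  unfolding cpositive_def by simp

lemma pos_is_csqrt:
  fixes q :: "'a::cstar_algebra"
  assumes pq: "cpositive q"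
  shows "q = csqrt (q * q)"
proof -
  have saq: "adj q = q" using cpositive_sa[OF pq] .
  define c where "c = q * q"
  have pc: "cpositive c" unfolding c_def by (rule sa_square_positive[OF saq])
  define r where "r = csqrt c"
  have pr: "cpositive r" unfolding r_def by (rule csqrt_props(1)[OF pc])
  have rr: "r * r = c" unfolding r_def by (rule csqrt_props(2)[OF pc])
  have rc: "\<And>y. y * c = c * y \<Longrightarrow> y * r = r * y" unfolding r_def by (rule csqrt_props(3)[OF pc])
  have sar: "adj r = r" using cpositive_sa[OF pr] .
  have qr: "q * r = r * q" by (rule rc) (simp add: c_def mult.assoc)
  define sq where "sq = csqrt q"
  have psq: "cpositive sq" unfolding sq_def by (rule csqrt_props(1)[OF pq])
  have sqsq: "sq * sq = q" unfolding sq_def by (rule csqrt_props(2)[OF pq])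
  have sqc: "\<And>y. y * q = q * y \<Longrightarrow> y * sq = sq * y" unfolding sq_def by (rule csqrt_props(3)[OF pq])
  define sr where "sr = csqrt r"
  have psr: "cpositive sr" unfolding sr_def by (rule csqrt_props(1)[OF pr])
  have srsr: "sr * sr = r" unfolding sr_def by (rule csqrt_props(2)[OF pr])
  have src: "\<And>y. y * r = r * y \<Longrightarrow> y * sr = sr * y" unfolding sr_def by (rule csqrt_props(3)[OF pr])
  define e where "e = q - r"
  have sae: "adj e = e" unfolding e_def by (simp add: adj_diff saq sar)
  have sq_q: "sq * q = q * sq" using sqc[of q] by simp
  have sq_c: "sq * c = c * sq"
  proof -
    have "sq * c = (sq * q) * q" unfolding c_def by (simp only: mult.assoc)
    also have "\<dots> = (q * sq) * q" by (rule arg_cong[where f="\<lambda>z. z * q", OF sq_q])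
    also have "\<dots> = q * (sq * q)" by (simp only: mult.assoc)
    also have "\<dots> = q * (q * sq)" by (rule arg_cong[OF sq_q])
    also have "\<dots> = c * sq" unfolding c_def by (simp only: mult.assoc)
    finally show ?thesis .
  qed
  have sq_r: "sq * r = r * sq" using rc[OF sq_c] .
  have sq_e: "sq * e = e * sq" unfolding e_def by (simp only: right_diff_distrib left_diff_distrib sq_q sq_r)
  have sr_r: "sr * r = r * sr" using src[of r] by simp
  have sr_q: "sr * q = q * sr" using src[of q] qr by simp
  have sr_e: "sr * e = e * sr" unfolding e_def by (simp only: right_diff_distrib left_diff_distrib sr_q sr_r)
  define w where "w = sq * e"
  define v where "v = sr * e"
  have saw: "adj w = w" unfolding w_def using sq_e sae cpositive_sa[OF psq] by (simp add: adj_mult)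
  have sav: "adj v = v" unfolding v_def using sr_e sae cpositive_sa[OF psr] by (simp add: adj_mult)
  have ww: "w * w = q * (e * e)"
  proof -
    have "w * w = sq * (e * sq) * e" unfolding w_def by (simp add: mult.assoc)
    also have "\<dots> = (sq * sq) * (e * e)" unfolding sq_e[symmetric] by (simp only: mult.assoc)
    finally show ?thesis using sqsq by simp
  qed
  have vv: "v * v = r * (e * e)"
  proof -
    have "v * v = sr * (e * sr) * e" unfolding v_def by (simp add: mult.assoc)
    also have "\<dots> = (sr * sr) * (e * e)" unfolding sr_e[symmetric] by (simp only: mult.assoc)
    finally show ?thesis using srsr by simp
  qed
  have sum0: "w * w + v * v = 0"
  proof -
    have "w * w + v * v = (q + r) * (e * e)" unfolding ww vv by (simp only: distrib_right)
    also have "\<dots> = ((q + r) * (q - r)) * e" unfolding e_def by (simp only: mult.assoc)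
    also have "(q + r) * (q - r) = q * q - r * r"
      by (simp only: distrib_right right_diff_distrib qr) simp
    also have "q * q - r * r = 0" using rr c_def by simp
    finally show ?thesis by simp
  qed
  define a where "a = w * w"
  have pa: "cpositive a" unfolding a_def by (rule sa_square_positive[OF saw])
  have pv: "cpositive (v * v)" by (rule sa_square_positive[OF sav])
  have av: "a = - (v * v)" using sum0 unfolding a_def by (simp add: add_eq_0_iff)
  have "norm a \<le> 0"
  proof (rule sa_norm_le)
    show "adj a = a" by (rule cpositive_sa[OF pa])
    fix c :: complex assume "0 < cmod c"
    then have c0: "c \<noteq> 0" by auto
    show "cinvertible (a - sc c)"
    proof (cases "c \<in> complex_of_real ` {0..}")
      case False then show ?thesis by (rule cpositive_invertible[OF pa])
    next
      case True
      then obtain u where u: "c = complex_of_real u" "u \<ge> 0" by auto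
      have "- c \<notin> complex_of_real ` {0..}"
      proof
        assume "- c \<in> complex_of_real ` {0..}"
        then obtain u' where "- c = complex_of_real u'" "u' \<ge> 0" by auto
        then have "u = - u'" using u by (simp add: complex_eq_iff)
        then have "u = 0" using u \<open>u' \<ge> 0\<close> by simp
        then show False using c0 u by simp
      qed
      then have i: "cinvertible (v * v - sc (- c))" by (rule cpositive_invertible[OF pv])
      have "a - sc c = - (v * v - sc (- c))" unfolding av by (simp add: scaleC_minus_left)
      then show ?thesis using cinvertible_uminus[OF i] by simp
    qed
  qed simp
  then have a0: "a = 0" by simp
  have w0: "w = 0"
  proof -
    have "(norm w)^2 = norm (w * w)" using norm_sa_square[OF saw] by simp
    then show ?thesis using a0 a_def by simp
  qed
  have v0: "v = 0"
  proof -
    have "v * v = 0" using av a0 by simp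
    moreover have "(norm v)^2 = norm (v * v)" using norm_sa_square[OF sav] by simp
    ultimately show ?thesis by simp
  qed
  have qe: "q * e = 0"
  proof -
    have "q * e = sq * w" unfolding w_def using sqsq by (simp add: mult.assoc[symmetric])
    then show ?thesis using w0 by simp
  qed
  have re: "r * e = 0"
  proof -
    have "r * e = sr * v" unfolding v_def using srsr by (simp add: mult.assoc[symmetric])
    then show ?thesis using v0 by simp
  qed
  have "e * e = q * e - r * e" by (simp only: e_def left_diff_distrib)
  then have "e * e = 0" using qe re by simp
  then have "(norm e)^2 = 0" using norm_sa_square[OF sae] by simp
  then have "e = 0" by simp
  then show ?thesis unfolding e_def r_def c_def by simp
qed

lemma pos_sq_unique:
  fixes p q :: "'a::cstar_algebra"
  assumes "cpositive p" "cpositive q" "p * p = q * q"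
  shows "p = q"
  using pos_is_csqrt[OF assms(1)] pos_is_csqrt[OF assms(2)] assms(3) by simp

lemma cabs_eq:
  fixes t p :: "'a::cstar_algebra"
  assumes "cpositive p" "p * p = adj t * t"
  shows "cabs t = p"
  unfolding cabs_def
proof (rule the_equality)
  show "cpositive p \<and> p * p = adj t * t" using assms by simp
  fix p' assume "cpositive p' \<and> p' * p' = adj t * t"
  then show "p' = p" using pos_sq_unique[of p' p] assms by simp
qed

lemma adj_cinv_sa:
  fixes X :: "'a::cstar_algebra"
  assumes inv: "cinvertible X" and sa: "adj X = X"
  shows "adj (cinv X) = cinv X"
proof -
  have 1: "X * adj (cinv X) = 1"
    using arg_cong[OF cinv_props(2)[OF inv], of adj] by (simp add: adj_mult sa)
  have 2: "adj (cinv X) * X = 1"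
    using arg_cong[OF cinv_props(1)[OF inv], of adj] by (simp add: adj_mult sa)
  show ?thesis using cinv_eq(2)[OF 1 2] by simp
qed

lemma proj_parts:
  fixes E :: "'a::cstar_algebra"
  assumes idem: "E * E = E"
  shows "cinvertible ((E + adj E - 1) * (E + adj E - 1))"
    and "(E + adj E - 1) * (E + adj E - 1) = 1 - E - adj E + E * adj E + adj E * E"
    and "adj (E * (E + adj E - 1) * cinv ((E + adj E - 1) * (E + adj E - 1)))
         = E * (E + adj E - 1) * cinv ((E + adj E - 1) * (E + adj E - 1))"
    and "(E * (E + adj E - 1) * cinv ((E + adj E - 1) * (E + adj E - 1)))
         * (E * (E + adj E - 1) * cinv ((E + adj E - 1) * (E + adj E - 1)))
         = E * (E + adj E - 1) * cinv ((E + adj E - 1) * (E + adj E - 1))"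
    and "((E + adj E - 1) * (E + adj E - 1)) * (E * (E + adj E - 1) * cinv ((E + adj E - 1) * (E + adj E - 1)))
         = (E * (E + adj E - 1) * cinv ((E + adj E - 1) * (E + adj E - 1))) * ((E + adj E - 1) * (E + adj E - 1))"
    and "((E + adj E - 1) * (E + adj E - 1)) * (E * (E + adj E - 1) * cinv ((E + adj E - 1) * (E + adj E - 1)))
         = E * adj E"
proof -
  define F where "F = adj E"
  define S where "S = E + F - 1"
  define X where "X = S * S"
  have FF: "F * F = F" unfolding F_def using arg_cong[OF idem, of adj] by (simp add: adj_mult)
  have EEx: "E * (E * z) = E * z" for z using idem by (simp add: mult.assoc[symmetric])
  have FFx: "F * (F * z) = F * z" for z using FF by (simp add: mult.assoc[symmetric])
  have aF: "adj F = E" unfolding F_def by (simp add: adj_adj)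
  have saS: "adj S = S" unfolding S_def F_def by (simp add: adj_add adj_diff adj_adj)
  have XX: "X = 1 - E - F + E * F + F * E"
    unfolding X_def S_def by (simp add: algebra_simps idem FF EEx FFx)
  have saX: "adj X = X" unfolding X_def by (simp add: adj_mult saS)
  define K where "K = scaleC \<i> (E - F)"
  have saK: "adj K = K" unfolding K_def F_def
    by (simp add: adj_scaleC adj_diff adj_adj scaleC_minus_left scaleC_diff_right)
  have KK: "K * K = - ((E - F) * (E - F))"
    unfolding K_def by (simp add: mult_scaleC_left mult_scaleC_right scaleC_scaleC scaleC_minus_left scaleC_one)
  have X1: "X = K * K - sc (- 1)"
  proof -
    have "(E - F) * (E - F) = E - E * F - F * E + F"
      by (simp add: algebra_simps idem FF)
    then show ?thesis unfolding XX KK by (simp add: scaleC_minus_left scaleC_one)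
  qed
  have m1: "- 1 \<notin> complex_of_real ` {0..}"
  proof
    assume "- 1 \<in> complex_of_real ` {0..}"
    then obtain u :: real where "- 1 = complex_of_real u" "u \<ge> 0" by auto
    then have "u = -1" by (simp add: complex_eq_iff)
    then show False using \<open>u \<ge> 0\<close> by simp
  qed
  have invX: "cinvertible X" unfolding X1
    by (rule cpositive_invertible[OF sa_square_positive[OF saK] m1])
  define Y where "Y = cinv X"
  have XY: "X * Y = 1" "Y * X = 1" unfolding Y_def using cinv_props[OF invX] by auto
  have saY: "adj Y = Y" unfolding Y_def by (rule adj_cinv_sa[OF invX saX])
  have EFE: "X * E = E * F * E" "E * X = E * F * E"
    unfolding XX by (simp_all add: algebra_simps idem EEx)
  have XE: "X * E = E * X" using EFE by simp
  have XF: "X * F = F * X"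
  proof -
    have "adj (X * E) = adj (E * X)" using XE by simp
    then show ?thesis by (simp add: adj_mult saX aF F_def[symmetric])
  qed
  have XS: "X * S = S * X" unfolding X_def by (simp add: mult.assoc)
  have YE: "Y * E = E * Y" unfolding Y_def by (rule cinv_commute[OF invX XE])
  have YS: "Y * S = S * Y" unfolding Y_def by (rule cinv_commute[OF invX XS])
  have ES: "E * S = E * F" unfolding S_def by (simp add: algebra_simps idem)
  have SF: "S * F = E * F" unfolding S_def by (simp add: algebra_simps FF)
  have SE: "S * E = F * E" unfolding S_def by (simp add: algebra_simps idem)
  have FS: "F * S = F * E" unfolding S_def by (simp add: algebra_simps FF)
  define P where "P = E * S * Y"
  have YES: "Y * (E * S) = E * S * Y"
  proof -
    have "Y * (E * S) = (Y * E) * S" by (simp only: mult.assoc)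
    also have "\<dots> = E * (Y * S)" unfolding YE by (simp only: mult.assoc)
    also have "\<dots> = E * (S * Y)" unfolding YS ..
    finally show ?thesis by (simp only: mult.assoc)
  qed
  have adjP: "adj P = P"
  proof -
    have "adj P = Y * (S * F)" unfolding P_def by (simp add: adj_mult saY saS F_def mult.assoc)
    also have "\<dots> = Y * (E * S)" unfolding SF ES ..
    also have "\<dots> = P" unfolding P_def by (rule YES)
    finally show ?thesis .
  qed
  have ESES: "E * S * (E * S) = E * S * X"
  proof -
    have "E * S * (E * S) = E * ((S * E) * S)" by (simp only: mult.assoc)
    also have "S * E = F * S" unfolding SE FS ..
    also have "E * ((F * S) * S) = (E * F) * X" unfolding X_def by (simp only: mult.assoc)
    also have "E * F = E * S" unfolding ES ..
    finally show ?thesis .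
  qed
  have PP: "P * P = P"
  proof -
    have "P * P = E * S * (Y * (E * S)) * Y" unfolding P_def by (simp only: mult.assoc)
    also have "\<dots> = E * S * (E * S) * (Y * Y)" unfolding YES by (simp only: mult.assoc)
    also have "\<dots> = E * S * (X * Y) * Y" unfolding ESES by (simp only: mult.assoc)
    also have "\<dots> = P" unfolding XY P_def by simp
    finally show ?thesis .
  qed
  have XES: "X * (E * S) = E * S * X"
  proof -
    have "X * (E * S) = (X * E) * S" by (simp only: mult.assoc)
    also have "\<dots> = E * (X * S)" unfolding XE by (simp only: mult.assoc)
    also have "\<dots> = E * (S * X)" unfolding XS ..
    finally show ?thesis by (simp only: mult.assoc)
  qed
  have XP: "X * P = E * F"
  proof -
    have "X * P = (X * (E * S)) * Y" unfolding P_def by (simp only: mult.assoc)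
    also have "\<dots> = E * S * (X * Y)" unfolding XES by (simp only: mult.assoc)
    also have "\<dots> = E * F" unfolding XY ES by simp
    finally show ?thesis .
  qed
  have PX: "P * X = E * F"
  proof -
    have "P * X = E * S * (Y * X)" unfolding P_def by (simp only: mult.assoc)
    also have "\<dots> = E * F" unfolding XY ES by simp
    finally show ?thesis .
  qed
  show "cinvertible ((E + adj E - 1) * (E + adj E - 1))"
    using invX unfolding X_def S_def F_def .
  show "(E + adj E - 1) * (E + adj E - 1) = 1 - E - adj E + E * adj E + adj E * E"
    using XX unfolding X_def S_def F_def .
  show "adj (E * (E + adj E - 1) * cinv ((E + adj E - 1) * (E + adj E - 1)))
         = E * (E + adj E - 1) * cinv ((E + adj E - 1) * (E + adj E - 1))"
    using adjP unfolding P_def Y_def X_def S_def F_def .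
  show "(E * (E + adj E - 1) * cinv ((E + adj E - 1) * (E + adj E - 1)))
         * (E * (E + adj E - 1) * cinv ((E + adj E - 1) * (E + adj E - 1)))
         = E * (E + adj E - 1) * cinv ((E + adj E - 1) * (E + adj E - 1))"
    using PP unfolding P_def Y_def X_def S_def F_def .
  show "((E + adj E - 1) * (E + adj E - 1)) * (E * (E + adj E - 1) * cinv ((E + adj E - 1) * (E + adj E - 1)))
         = (E * (E + adj E - 1) * cinv ((E + adj E - 1) * (E + adj E - 1))) * ((E + adj E - 1) * (E + adj E - 1))"
    using XP PX unfolding P_def Y_def X_def S_def F_def by simp
  show "((E + adj E - 1) * (E + adj E - 1)) * (E * (E + adj E - 1) * cinv ((E + adj E - 1) * (E + adj E - 1)))
         = E * adj E"
    using XP unfolding P_def Y_def X_def S_def F_def .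
qed

lemma proj_pos:
  fixes T P :: "'a::cstar_algebra"
  assumes pT: "cpositive T" and saP: "adj P = P" and PP: "P * P = P" and TP: "T * P = P * T"
  shows "cpositive (T * P)"
proof (rule cpositiveI)
  show "adj (T * P) = T * P" using TP by (simp add: adj_mult saP cpositive_sa[OF pT])
  fix c :: complex assume c: "c \<notin> complex_of_real ` {0..}"
  have c0: "c \<noteq> 0" using c by force
  define A where "A = T - sc c"
  have invA: "cinvertible A" unfolding A_def by (rule cpositive_invertible[OF pT c])
  define Z where "Z = cinv A"
  have AZ: "A * Z = 1" "Z * A = 1" unfolding Z_def using cinv_props[OF invA] by auto
  have AP: "A * P = P * A" unfolding A_def using TP
    by (simp add: left_diff_distrib right_diff_distrib sc_commute)
  have ZP: "Z * P = P * Z" unfolding Z_def by (rule cinv_commute[OF invA AP])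
  have P1: "P * (1 - P) = 0" "(1 - P) * P = 0" "(1 - P) * (1 - P) = 1 - P"
    using PP by (simp_all add: algebra_simps)
  define d where "d = inverse c"
  have dc: "d * c = 1" "c * d = 1" unfolding d_def using c0 by auto
  define B where "B = A * P - scaleC c (1 - P)"
  have BT: "T * P - sc c = B"
    unfolding B_def A_def by (simp add: left_diff_distrib scaleC_diff_right mult_scaleC_left)
  define W where "W = P * Z - scaleC d (1 - P)"
  have BW: "B * W = 1"
  proof -
    have t1: "A * P * (P * Z) = P"
    proof -
      have "A * P * (P * Z) = A * (P * P) * Z" by (simp only: mult.assoc)
      also have "\<dots> = (A * P) * Z" unfolding PP ..
      also have "\<dots> = P * (A * Z)" unfolding AP by (simp only: mult.assoc)
      finally show ?thesis using AZ by simp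
    qed
    have t2: "A * P * scaleC d (1 - P) = 0"
      by (simp add: mult_scaleC_right mult.assoc P1)
    have t3: "scaleC c (1 - P) * (P * Z) = 0"
      by (simp add: mult_scaleC_left mult.assoc[symmetric] P1)
    have t4: "scaleC c (1 - P) * scaleC d (1 - P) = 1 - P"
      by (simp add: mult_scaleC_left mult_scaleC_right scaleC_scaleC P1 dc scaleC_one)
    have "B * W = A * P * (P * Z) - A * P * scaleC d (1 - P)
                 - (scaleC c (1 - P) * (P * Z) - scaleC c (1 - P) * scaleC d (1 - P))"
      unfolding B_def W_def by (simp add: left_diff_distrib right_diff_distrib)
    also have "\<dots> = 1" unfolding t1 t2 t3 t4 by simp
    finally show ?thesis .
  qed
  have WB: "W * B = 1"
  proof -
    have t1: "P * Z * (A * P) = P"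
    proof -
      have "P * Z * (A * P) = P * (Z * A) * P" by (simp only: mult.assoc)
      then show ?thesis using AZ PP by simp
    qed
    have t2: "P * Z * scaleC c (1 - P) = 0"
    proof -
      have "P * Z * (1 - P) = Z * (P * (1 - P))" unfolding ZP[symmetric] by (simp only: mult.assoc)
      then show ?thesis by (simp add: mult_scaleC_right P1)
    qed
    have t3: "scaleC d (1 - P) * (A * P) = 0"
    proof -
      have "(1 - P) * (A * P) = ((1 - P) * P) * A" unfolding AP by (simp only: mult.assoc)
      then show ?thesis by (simp add: mult_scaleC_left P1)
    qed
    have t4: "scaleC d (1 - P) * scaleC c (1 - P) = 1 - P"
      by (simp add: mult_scaleC_left mult_scaleC_right scaleC_scaleC P1 dc scaleC_one)
    have "W * B = P * Z * (A * P) - P * Z * scaleC c (1 - P)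
                 - (scaleC d (1 - P) * (A * P) - scaleC d (1 - P) * scaleC c (1 - P))"
      unfolding B_def W_def by (simp add: left_diff_distrib right_diff_distrib)
    also have "\<dots> = 1" unfolding t1 t2 t3 t4 by simp
    finally show ?thesis .
  qed
  show "cinvertible (T * P - sc c)" unfolding BT using cinv_eq(1)[OF BW WB] .
qed

lemma sq_commute:
  fixes T P :: "'a::cstar_algebra"
  assumes "T * P = P * T"
  shows "(T * P) * (T * P) = (T * T) * (P * P)"
proof -
  have "(T * P) * (T * P) = T * (P * T) * P" by (simp only: mult.assoc)
  also have "\<dots> = T * (T * P) * P" unfolding assms ..
  finally show ?thesis by (simp only: mult.assoc)
qed

theorem mainTheorem9:
  fixes Q :: "'a::cstar_algebra"
  assumes "Q * Q = Q"
  shows "cabs (adj Q) + cabs (1 - Q) = cabs Q + cabs (1 - adj Q)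
    \<and> (cabs (adj Q) + cabs (1 - Q)) * (cabs (adj Q) + cabs (1 - Q))
        = 1 - Q - adj Q + Q * adj Q + adj Q * Q
    \<and> (cabs Q + cabs (1 - adj Q)) * (cabs Q + cabs (1 - adj Q))
        = 1 - Q - adj Q + Q * adj Q + adj Q * Q"
proof -
  note idem = assms
  have idem': "adj Q * adj Q = adj Q" using arg_cong[OF idem, of adj] by (simp add: adj_mult)
  define S where "S = Q + adj Q - 1"
  have S': "adj Q + adj (adj Q) - 1 = S" unfolding S_def by (simp add: adj_adj add.commute)
  define X where "X = S * S"
  define P where "P = Q * S * cinv X"
  define P' where "P' = adj Q * S * cinv X"
  note pp1 = proj_parts[OF idem, folded S_def, folded X_def, folded P_def]
  note pp2 = proj_parts[OF idem', unfolded S', folded X_def, folded P'_def, unfolded adj_adj]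
  have Xf: "X = 1 - Q - adj Q + Q * adj Q + adj Q * Q" by (rule pp1(2))
  have saS: "adj S = S" unfolding S_def by (simp add: adj_add adj_diff adj_adj add.commute)
  have pX: "cpositive X" unfolding X_def by (rule sa_square_positive[OF saS])
  define T where "T = csqrt X"
  have pT: "cpositive T" unfolding T_def by (rule csqrt_props(1)[OF pX])
  have TT: "T * T = X" unfolding T_def by (rule csqrt_props(2)[OF pX])
  have Tc: "\<And>y. y * X = X * y \<Longrightarrow> y * T = T * y" unfolding T_def by (rule csqrt_props(3)[OF pX])
  have TP: "T * P = P * T" using Tc[of P] pp1(5) by simp
  have TP': "T * P' = P' * T" using Tc[of P'] pp2(5) by simp
  have saP: "adj P = P" by (rule pp1(3))
  have saP': "adj P' = P'" by (rule pp2(3))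
  have PP: "P * P = P" by (rule pp1(4))
  have PP': "P' * P' = P'" by (rule pp2(4))
  have XP: "X * P = Q * adj Q" by (rule pp1(6))
  have XP': "X * P' = adj Q * Q" by (rule pp2(6))
  have saQ1: "adj (1 - P) = 1 - P" by (simp add: adj_diff saP)
  have saQ1': "adj (1 - P') = 1 - P'" by (simp add: adj_diff saP')
  have PQ1: "(1 - P) * (1 - P) = 1 - P" using PP by (simp add: algebra_simps)
  have PQ1': "(1 - P') * (1 - P') = 1 - P'" using PP' by (simp add: algebra_simps)
  have TQ1: "T * (1 - P) = (1 - P) * T" using TP by (simp add: algebra_simps)
  have TQ1': "T * (1 - P') = (1 - P') * T" using TP' by (simp add: algebra_simps)
  have c1: "cabs (adj Q) = T * P"
  proof (rule cabs_eq)
    show "cpositive (T * P)" by (rule proj_pos[OF pT saP PP TP])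
    show "T * P * (T * P) = adj (adj Q) * adj Q"
      unfolding sq_commute[OF TP] TT PP XP by (simp add: adj_adj)
  qed
  have c2: "cabs (1 - Q) = T * (1 - P)"
  proof (rule cabs_eq)
    show "cpositive (T * (1 - P))" by (rule proj_pos[OF pT saQ1 PQ1 TQ1])
    have "X * (1 - P) = X - Q * adj Q" using XP by (simp add: right_diff_distrib)
    also have "\<dots> = adj (1 - Q) * (1 - Q)" unfolding Xf
      by (simp add: adj_diff algebra_simps)
    finally show "T * (1 - P) * (T * (1 - P)) = adj (1 - Q) * (1 - Q)"
      unfolding sq_commute[OF TQ1] TT PQ1 .
  qed
  have c3: "cabs Q = T * P'"
  proof (rule cabs_eq)
    show "cpositive (T * P')" by (rule proj_pos[OF pT saP' PP' TP'])
    show "T * P' * (T * P') = adj Q * Q"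
      unfolding sq_commute[OF TP'] TT PP' XP' ..
  qed
  have c4: "cabs (1 - adj Q) = T * (1 - P')"
  proof (rule cabs_eq)
    show "cpositive (T * (1 - P'))" by (rule proj_pos[OF pT saQ1' PQ1' TQ1'])
    have "X * (1 - P') = X - adj Q * Q" using XP' by (simp add: right_diff_distrib)
    also have "\<dots> = adj (1 - adj Q) * (1 - adj Q)" unfolding Xf
      by (simp add: adj_diff adj_adj algebra_simps)
    finally show "T * (1 - P') * (T * (1 - P')) = adj (1 - adj Q) * (1 - adj Q)"
      unfolding sq_commute[OF TQ1'] TT PQ1' .
  qed
  have s1: "cabs (adj Q) + cabs (1 - Q) = T" unfolding c1 c2 by (simp add: algebra_simps)
  have s2: "cabs Q + cabs (1 - adj Q) = T" unfolding c3 c4 by (simp add: algebra_simps)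
  show ?thesis unfolding s1 s2 TT Xf by simp
qed

end
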